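(* Let $H:\mathbb{R}/\mathbb{Z}\times\mathbb{D}\to\mathbb{R}$ be smooth, vanishing on $\mathbb{R}/\mathbb{Z}\times\partial\mathbb{D}$, generating the symplectic isotopy $\tilde\varphi$, and suppose that the Hamiltonian vector field $X_{H^t}$ restricted to $\partial\mathbb{D}$ is independent of $t$ and that the rotation number on the boundary satisfies $|\rho(\tilde\varphi|_{\partial\mathbb{D}})|<1$. Let $H_n$ be defined, in polar coordinates $(r,\theta)$, by $H_n(t,1+r,\theta)=H(t,1+\rho_n(r),\theta)$ (with $H_n=H$ on $\mathbb{D}$), where $H$ also denotes a fixed smooth extension of $H$ to $\mathbb{R}/\mathbb{Z}\times\mathbb{R}^2$ and $\rho_n:\mathbb{R}\to\mathbb{R}$ are smooth functions with $\rho_n(r)=r$ for $r\le0$, $\rho_n(r)=0$ for $r\ge1/n$, and on $r\ge0$: $\rho_n\ge0$, $|\rho_n'|\le1$, $|\rho_n|\le1/n$, together with $\rho_n'(r)\ge-1/n$ for all $r$. Then for all sufficiently large $n$, every trajectory $x_n:[0,1]\to\mathbb{R}^2$ of $X_{H_n}$ whose image lies in $\mathbb{R}^2\setminus\dot{\mathbb{D}}$ satisfies $|\mathrm{wind}(x_n)|<1$.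
   Context: $\mathbb{D}\subset\mathbb{R}^2$ is the closed unit disc, $\dot{\mathbb{D}}$ its interior, $\omega=dx\wedge dy$. Hamiltonian vector fields are defined by $\iota_{X_{H^t}}\omega=dH^t$, and $\tilde\varphi=\{\varphi_t\}$ is the flow $\frac{d}{dt}\varphi_t=X_{H^t}\circ\varphi_t$, $\varphi_0=\mathrm{id}$, which preserves $\mathbb{D}$. The rotation number $\rho(\tilde\varphi|_{\partial\mathbb{D}})$ is the rotation number (in full turns) of the lift of $\varphi_1|_{\partial\mathbb{D}}$ determined by the isotopy. If $x(t)=r(t)e^{i\theta(t)}$ with $\theta$ continuous, then $\mathrm{wind}(x)=(\theta(1)-\theta(0))/2\pi$. *)

theory Defs
  imports "HOL-Analysis.Analysis"
begin

text \<open>The plane R^2 is identified with the complex numbers; the closed unit disc is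
  the set of z with norm z \<le> 1.\<close>

coinductive smooth :: "('a::real_normed_vector \<Rightarrow> 'b::real_normed_vector) \<Rightarrow> bool" where
  smoothI: "(\<And>x. (f has_derivative f' x) (at x)) \<Longrightarrow> (\<And>v. smooth (\<lambda>x. f' x v)) \<Longrightarrow> smooth f"

text \<open>Symplectic form omega = dx wedge dy, so omega(v,w) = Im (cnj v * w).
  The Hamiltonian vector field X with iota_X omega = dH^t.\<close>
definition omega :: "complex \<Rightarrow> complex \<Rightarrow> real" where
  "omega v w = Im (cnj v * w)"

definition hamvf :: "(real \<Rightarrow> complex \<Rightarrow> real) \<Rightarrow> real \<Rightarrow> complex \<Rightarrow> complex" where
  "hamvf H t z = (THE v. \<forall>w. frechet_derivative (H t) (at z) w = omega v w)"

text \<open>The flow phi_t of X_{H^t} (for initial points in the disc, where it exists for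
  all times).\<close>
definition flow :: "(real \<Rightarrow> complex \<Rightarrow> real) \<Rightarrow> real \<Rightarrow> complex \<Rightarrow> complex" where
  "flow H t z = (THE x. x 0 = z \<and> (\<forall>s. (x has_vector_derivative hamvf H s (x s)) (at s))) t"

definition boundary_lift :: "(real \<Rightarrow> complex \<Rightarrow> real) \<Rightarrow> real \<Rightarrow> real" where
  "boundary_lift H s = (THE y. \<exists>\<theta>. continuous_on {0..1} \<theta> \<and> \<theta> 0 = s \<and>
      (\<forall>t\<in>{0..1}. flow H t (cis (2 * pi * s)) = cis (2 * pi * \<theta> t)) \<and> y = \<theta> 1)"

definition rotation_number :: "(real \<Rightarrow> complex \<Rightarrow> real) \<Rightarrow> real" where
  "rotation_number H = lim (\<lambda>k. ((boundary_lift H ^^ k) 0 - 0) / real k)"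

definition wind :: "(real \<Rightarrow> complex) \<Rightarrow> real" where
  "wind x = (THE w. \<exists>\<theta>. continuous_on {0..1} \<theta> \<and>
      (\<forall>t\<in>{0..1}. x t = of_real (norm (x t)) * cis (\<theta> t)) \<and> w = (\<theta> 1 - \<theta> 0) / (2 * pi))"

text \<open>H_n(t,1+r,theta) = H(t,1+rho(r),theta) outside the disc, H_n = H on the disc.\<close>
definition cutoff_ham :: "(real \<Rightarrow> complex \<Rightarrow> real) \<Rightarrow> (real \<Rightarrow> real) \<Rightarrow> real \<Rightarrow> complex \<Rightarrow> real" where
  "cutoff_ham H \<rho> t z = (if norm z \<le> 1 then H t z
      else H t (of_real ((1 + \<rho> (norm z - 1)) / norm z) * z))"

end

theory Submission
  imports Defs
begin

lemma smooth_E: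
  assumes "smooth f"
  obtains f' where "\<And>x. (f has_derivative f' x) (at x)" "\<And>v. smooth (\<lambda>x. f' x v)"
  using assms by (cases rule: smooth.cases) auto

lemma smooth_isCont: "smooth f \<Longrightarrow> isCont f x"
  by (metis smooth_E has_derivative_continuous)

lemma smooth_cont: "smooth f \<Longrightarrow> continuous_on S f"
  by (simp add: continuous_at_imp_continuous_on smooth_isCont)

lemma linear_complex_decomp:
  fixes D :: "complex \<Rightarrow> real"
  assumes "linear D"
  shows "D w = Re w * D 1 + Im w * D \<i>"
proof -
  have "w = Re w *\<^sub>R 1 + Im w *\<^sub>R \<i>" by (simp add: complex_eq_iff)
  then have "D w = D (Re w *\<^sub>R 1 + Im w *\<^sub>R \<i>)" by simp
  also have "\<dots> = Re w * D 1 + Im w * D \<i>"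
    using assms by (simp add: linear_add linear_scale)
  finally show ?thesis .
qed

lemma hamvf_eq:
  assumes "(G t has_derivative D) (at z)"
  shows "hamvf G t z = Complex (D \<i>) (- D 1)"
proof -
  have fd: "frechet_derivative (G t) (at z) = D"
    using frechet_derivative_at[OF assms] by simp
  have lin: "linear D" using assms has_derivative_linear by blast
  have ok: "\<forall>w. D w = omega (Complex (D \<i>) (- D 1)) w"
  proof
    fix w
    have "omega (Complex (D \<i>) (- D 1)) w = D \<i> * Im w + D 1 * Re w"
      by (simp add: omega_def)
    then show "D w = omega (Complex (D \<i>) (- D 1)) w"
      using linear_complex_decomp[OF lin, of w] by (simp add: mult.commute)
  qed
  have uq: "v = Complex (D \<i>) (- D 1)" if "\<forall>w. D w = omega v w" for v
  proof -
    have "D 1 = omega v 1" "D \<i> = omega v \<i>" using that by auto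
    moreover have "omega v 1 = - Im v" "omega v \<i> = Re v"
      unfolding omega_def by simp_all
    ultimately have "Re v = D \<i>" "Im v = - D 1" by simp_all
    then show ?thesis by (metis complex_surj)
  qed
  show ?thesis unfolding hamvf_def fd
    by (rule the_equality) (use ok uq in blast)+
qed

lemma cis_eq_int:
  assumes "cis a = cis b"
  shows "\<exists>k::int. a - b = of_int k * (2 * pi)"
proof -
  have "cis (a - b) = 1" using assms by (simp add: cis_divide[symmetric])
  then have "cos (a - b) = 1" by (metis cis.sel(1) one_complex.sel(1))
  then obtain n :: int where "a - b = of_int n * 2 * pi" using cos_one_2pi_int by blast
  then show ?thesis by (intro exI[of _ n]) simp
qed

lemma lift_unique:
  fixes \<phi> \<theta> :: "real \<Rightarrow> real"
  assumes cf: "continuous_on {0..1} \<phi>" and cg: "continuous_on {0..1} \<theta>"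
    and eq: "\<And>t. t \<in> {0..1} \<Longrightarrow> cis (\<phi> t) = cis (\<theta> t)"
  shows "\<phi> 1 - \<phi> 0 = \<theta> 1 - \<theta> 0"
proof -
  define f where "f t = (\<phi> t - \<theta> t) / (2 * pi)" for t
  have fint: "\<exists>k::int. f t = of_int k" if tt: "t \<in> {0..1}" for t
  proof -
    obtain k :: int where "\<phi> t - \<theta> t = of_int k * (2 * pi)" using cis_eq_int[OF eq[OF tt]] by blast
    then show ?thesis by (intro exI[of _ k]) (simp add: f_def)
  qed
  have "f constant_on {0..1}"
  proof (rule continuous_discrete_range_constant[OF connected_Icc])
    show "continuous_on {0..1} f" unfolding f_def by (intro continuous_intros cf cg) auto
  next
    fix x assume x: "x \<in> {0..1::real}"
    show "\<exists>e>0. \<forall>y. y \<in> {0..1} \<and> f y \<noteq> f x \<longrightarrow> e \<le> norm (f y - f x)"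
    proof (intro exI[of _ 1] conjI allI impI)
      fix y assume y: "y \<in> {0..1} \<and> f y \<noteq> f x"
      obtain k :: int where k: "f x = of_int k" using fint x by blast
      obtain l :: int where l: "f y = of_int l" using fint y by blast
      have "k \<noteq> l" using y k l by auto
      then have "1 \<le> \<bar>l - k\<bar>" by arith
      then have "(1::real) \<le> of_int \<bar>l - k\<bar>" by linarith
      then have "1 \<le> \<bar>of_int l - of_int k :: real\<bar>" by simp
      then show "1 \<le> norm (f y - f x)" using k l by simp
    qed simp
  qed
  then have "f 1 = f 0" unfolding constant_on_def by force
  then show ?thesis unfolding f_def by (simp add: field_simps)
qed

lemma wind_eq:
  fixes \<phi> :: "real \<Rightarrow> real" and x :: "real \<Rightarrow> complex"
  assumes cf: "continuous_on {0..1} \<phi>"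
    and xeq: "\<And>t. t \<in> {0..1} \<Longrightarrow> x t = of_real (norm (x t)) * cis (\<phi> t)"
    and nz: "\<And>t. t \<in> {0..1} \<Longrightarrow> x t \<noteq> 0"
  shows "wind x = (\<phi> 1 - \<phi> 0) / (2 * pi)"
  unfolding wind_def
proof (rule the_equality)
  show "\<exists>\<theta>. continuous_on {0..1} \<theta> \<and> (\<forall>t\<in>{0..1}. x t = of_real (norm (x t)) * cis (\<theta> t))
          \<and> (\<phi> 1 - \<phi> 0) / (2 * pi) = (\<theta> 1 - \<theta> 0) / (2 * pi)"
    using cf xeq by blast
next
  fix w assume "\<exists>\<theta>. continuous_on {0..1} \<theta> \<and> (\<forall>t\<in>{0..1}. x t = of_real (norm (x t)) * cis (\<theta> t))
          \<and> w = (\<theta> 1 - \<theta> 0) / (2 * pi)"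
  then obtain \<theta> where c\<theta>: "continuous_on {0..1} \<theta>"
    and th: "\<forall>t\<in>{0..1}. x t = of_real (norm (x t)) * cis (\<theta> t)" and w: "w = (\<theta> 1 - \<theta> 0) / (2 * pi)"
    by blast
  have "cis (\<phi> t) = cis (\<theta> t)" if "t \<in> {0..1}" for t
  proof -
    have "of_real (norm (x t)) * cis (\<phi> t) = of_real (norm (x t)) * cis (\<theta> t)"
      using xeq[OF that] th that by metis
    moreover have "(of_real (norm (x t)) :: complex) \<noteq> 0" using nz[OF that] by simp
    ultimately show ?thesis by simp
  qed
  then have "\<phi> 1 - \<phi> 0 = \<theta> 1 - \<theta> 0" by (rule lift_unique[OF cf c\<theta>])
  then show "w = (\<phi> 1 - \<phi> 0) / (2 * pi)" using w by simp
qed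

lemma antideriv_exists:
  fixes f :: "real \<Rightarrow> real"
  assumes "\<And>x. isCont f x"
  obtains F where "\<And>x. (F has_real_derivative f x) (at x)"
proof -
  have "\<exists>F. \<forall>x :: real. -\<infinity> < ereal x \<longrightarrow> ereal x < \<infinity> \<longrightarrow> (F has_vector_derivative f x) (at x)"
    by (rule einterval_antiderivative) (use assms in auto)
  then obtain F where "\<And>x. (F has_vector_derivative f x) (at x)" by auto
  then show ?thesis using that by (metis has_real_derivative_iff_has_vector_derivative)
qed

lemma angle_lift:
  fixes x x' :: "real \<Rightarrow> complex"
  assumes der: "\<And>t. t \<in> {0..1} \<Longrightarrow> (x has_vector_derivative x' t) (at t within {0..1})"
    and nz: "\<And>t. t \<in> {0..1} \<Longrightarrow> x t \<noteq> 0"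
  obtains \<phi> where "continuous_on {0..1} \<phi>"
    "\<And>t. t \<in> {0..1} \<Longrightarrow> x t = of_real (norm (x t)) * cis (\<phi> t)"
    "\<And>t. t \<in> {0..1} \<Longrightarrow> (\<phi> has_real_derivative Im (x' t / x t)) (at t within {0..1})"
proof -
  have cx: "continuous_on {0..1} x" using der by (rule continuous_on_vector_derivative)
  obtain g where cg: "continuous_on {0..1} g" and xg: "\<And>t. t \<in> {0..1} \<Longrightarrow> x t = exp (g t)"
    using continuous_logarithm_on_contractible[OF cx convex_imp_contractible[OF convex_real_interval(5)] nz]
    by blast
  define \<phi> where "\<phi> t = Im (g t)" for t
  have c\<phi>: "continuous_on {0..1} \<phi>" unfolding \<phi>_def by (intro continuous_intros cg)
  have eq: "x t = of_real (norm (x t)) * cis (\<phi> t)" if "t \<in> {0..1}" for t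
  proof -
    have n: "norm (x t) = exp (Re (g t))" using xg[OF that] by simp
    show ?thesis unfolding n \<phi>_def using xg[OF that] by (simp add: exp_eq_polar[of "g t"])
  qed
  have gder: "(g has_vector_derivative (x' t0 / x t0)) (at t0 within {0..1})" if t0: "t0 \<in> {0..1}" for t0
  proof -
    obtain d where d: "d > 0" and dd: "\<And>s. s \<in> {0..1} \<Longrightarrow> dist s t0 < d \<Longrightarrow> dist (g s) (g t0) < pi"
      using cg t0 unfolding continuous_on_iff by (metis pi_gt_zero)
    define h where "h s = g t0 + Ln (x s * inverse (x t0))" for s
    have gh: "g s = h s" if "s \<in> {0..1}" "dist s t0 < d" for s
    proof -
      have "x s * inverse (x t0) = exp (g s - g t0)"
        using xg[OF that(1)] xg[OF t0] by (simp add: exp_diff field_simps)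
      moreover have "\<bar>Im (g s - g t0)\<bar> < pi"
        using dd[OF that] abs_Im_le_cmod[of "g s - g t0"] by (simp add: dist_norm)
      ultimately have "Ln (x s * inverse (x t0)) = g s - g t0" by simp
      then show ?thesis by (simp add: h_def)
    qed
    have d1: "((\<lambda>s. x s * inverse (x t0)) has_vector_derivative x' t0 * inverse (x t0)) (at t0 within {0..1})"
      by (intro derivative_intros der t0)
    have one: "x t0 * inverse (x t0) = 1" using nz[OF t0] by simp
    have lnd: "(Ln has_field_derivative inverse 1) (at ((\<lambda>s. x s * inverse (x t0)) t0) within (\<lambda>s. x s * inverse (x t0)) ` {0..1})"
      unfolding one by (rule has_field_derivative_at_within, rule has_field_derivative_Ln) auto
    have "((Ln \<circ> (\<lambda>s. x s * inverse (x t0))) has_vector_derivative x' t0 * inverse (x t0) * inverse 1) (at t0 within {0..1})"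
      by (rule field_vector_diff_chain_within[OF d1 lnd])
    then have "(h has_vector_derivative x' t0 / x t0) (at t0 within {0..1})"
      unfolding h_def o_def
      by (rule has_vector_derivative_eq_rhs[OF has_vector_derivative_add[OF has_vector_derivative_const]])
        (simp add: field_simps)
    then show ?thesis
      by (rule has_vector_derivative_transform_within[OF _ d t0]) (simp add: gh)
  qed
  have "(\<phi> has_real_derivative Im (x' t / x t)) (at t within {0..1})" if "t \<in> {0..1}" for t
    unfolding \<phi>_def by (rule has_field_derivative_Im[OF gder[OF that]])
  then show ?thesis using that c\<phi> eq by blast
qed

locale hsetup =
  fixes H :: "real \<Rightarrow> complex \<Rightarrow> real" and F' :: "real \<times> complex \<Rightarrow> real \<times> complex \<Rightarrow> real"
  assumes Fder: "\<And>p. ((\<lambda>p. H (fst p) (snd p)) has_derivative F' p) (at p)"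
    and F'sm: "\<And>v. smooth (\<lambda>p. F' p v)"
    and Hbd: "\<And>t z. norm z = 1 \<Longrightarrow> H t z = 0"
    and Xaut: "\<And>t s z. norm z = 1 \<Longrightarrow> hamvf H t z = hamvf H s z"
begin

definition dH where "dH t z w = F' (t, z) (0, w)"
definition E1 where "E1 p = F' p (0, 1)"
definition Ei where "Ei p = F' p (0, \<i>)"

lemma F'lin: "linear (F' p)"
  using Fder has_derivative_linear by blast

lemma dH_deriv: "(H t has_derivative dH t z) (at z)"
proof -
  have i: "((\<lambda>z. (t, z)) has_derivative (\<lambda>w. (0, w))) (at z)"
    by (auto intro!: derivative_eq_intros)
  have "((\<lambda>p. H (fst p) (snd p)) \<circ> (\<lambda>z. (t, z)) has_derivative F' (t, z) \<circ> (\<lambda>w. (0, w))) (at z)"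
    by (rule diff_chain_at[OF i Fder])
  then show ?thesis by (simp add: o_def dH_def[abs_def])
qed

lemma dH_lin: "linear (dH t z)"
  using dH_deriv has_derivative_linear by blast

lemma dH_eq: "dH t z w = Re w * E1 (t, z) + Im w * Ei (t, z)"
proof -
  have "(0::real, w) = Re w *\<^sub>R (0, 1) + Im w *\<^sub>R (0, \<i>)"
    by (simp add: complex_eq_iff)
  then have "F' (t, z) (0, w) = F' (t, z) (Re w *\<^sub>R (0, 1) + Im w *\<^sub>R (0, \<i>))" by metis
  also have "\<dots> = Re w *\<^sub>R F' (t, z) (0, 1) + Im w *\<^sub>R F' (t, z) (0, \<i>)"
    by (simp only: linear_add[OF F'lin] linear_scale[OF F'lin])
  also have "\<dots> = Re w * E1 (t, z) + Im w * Ei (t, z)"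
    by (simp add: E1_def Ei_def)
  finally show ?thesis by (simp add: dH_def)
qed

lemma hamvf_H: "hamvf H t z = Complex (Ei (t, z)) (- E1 (t, z))"
proof -
  have "hamvf H t z = Complex (dH t z \<i>) (- dH t z 1)"
    by (rule hamvf_eq[OF dH_deriv])
  then show ?thesis by (simp add: dH_eq)
qed

lemma E1_sm: "smooth E1" and Ei_sm: "smooth Ei"
  using F'sm unfolding E1_def[abs_def] Ei_def[abs_def] by auto

lemma E1_cont: "continuous_on S E1" and Ei_cont: "continuous_on S Ei"
  using smooth_cont E1_sm Ei_sm by auto

lemma tang: assumes "norm u = 1" shows "dH t u (\<i> * u) = 0"
proof -
  have "u \<noteq> 0" using assms by auto
  then have "cis (Arg u) = sgn u" by (rule cis_Arg)
  moreover have "sgn u = u" using assms by (simp add: sgn_div_norm)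
  ultimately have u: "u = cis (Arg u)" by simp
  define a where "a = Arg u"
  have d1: "((\<lambda>s. cis s) has_derivative (\<lambda>h. h *\<^sub>R (\<i> * cis a))) (at a)"
    using has_derivative_cis[OF has_derivative_ident[of "at a"]] by simp
  have "((H t \<circ> (\<lambda>s. cis s)) has_derivative dH t (cis a) \<circ> (\<lambda>h. h *\<^sub>R (\<i> * cis a))) (at a)"
    by (rule diff_chain_at[OF d1 dH_deriv])
  moreover have "H t \<circ> (\<lambda>s. cis s) = (\<lambda>_. 0)" by (auto simp: Hbd)
  ultimately have "((\<lambda>_. 0) has_derivative dH t (cis a) \<circ> (\<lambda>h. h *\<^sub>R (\<i> * cis a))) (at a)" by simp
  then have "dH t (cis a) \<circ> (\<lambda>h. h *\<^sub>R (\<i> * cis a)) = (\<lambda>_. 0)"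
    using has_derivative_unique has_derivative_const by blast
  then have "dH t (cis a) (1 *\<^sub>R (\<i> * cis a)) = 0" by (metis comp_apply)
  then show ?thesis using u a_def by simp
qed

lemma aut: assumes "norm u = 1" shows "dH t u w = dH 0 u w"
proof -
  have "Complex (Ei (t, u)) (- E1 (t, u)) = Complex (Ei (0, u)) (- E1 (0, u))"
    using Xaut[OF assms, of t 0] by (simp add: hamvf_H)
  then show ?thesis by (simp add: dH_eq)
qed

lemma dH_circle: assumes "norm u = 1" shows "dH t u w = Re (cnj u * w) * dH 0 u u"
proof -
  define c where "c = cnj u * w"
  have "cnj u * u = 1" using complex_norm_square[of u] assms by (simp add: mult.commute)
  moreover have "c * u = w * (cnj u * u)" by (simp add: c_def algebra_simps)
  ultimately have "w = c * u" by simp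
  also have "\<dots> = Re c *\<^sub>R u + Im c *\<^sub>R (\<i> * u)"
    by (simp add: complex_eq_iff scaleR_conv_of_real)
  finally have w: "w = Re c *\<^sub>R u + Im c *\<^sub>R (\<i> * u)" .
  have "dH t u w = Re c * dH t u u + Im c * dH t u (\<i> * u)"
    using dH_lin[of t u] by (subst w) (simp add: linear_add linear_scale)
  also have "\<dots> = Re c * dH 0 u u" using tang[OF assms] aut[OF assms] by simp
  finally show ?thesis by (simp add: c_def)
qed

definition bb where "bb \<phi> = dH 0 (cis \<phi>) (cis \<phi>)"

lemma bb_alt: "bb \<phi> = cos \<phi> * E1 (0, cis \<phi>) + sin \<phi> * Ei (0, cis \<phi>)"
  by (simp add: bb_def dH_eq)

lemma hamvf_circle: "hamvf H t (cis \<phi>) = - \<i> * of_real (bb \<phi>) * cis \<phi>"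
proof -
  have n: "norm (cis \<phi>) = 1" by simp
  have "E1 (t, cis \<phi>) = dH t (cis \<phi>) 1" "Ei (t, cis \<phi>) = dH t (cis \<phi>) \<i>"
    by (simp_all add: dH_eq)
  then have "E1 (t, cis \<phi>) = cos \<phi> * bb \<phi>" "Ei (t, cis \<phi>) = sin \<phi> * bb \<phi>"
    using dH_circle[OF n, of t 1] dH_circle[OF n, of t \<i>] by (simp_all add: bb_def)
  then show ?thesis by (simp add: hamvf_H complex_eq_iff)
qed

lemma bb_isCont: "isCont bb x"
proof -
  have "isCont E1 p" "isCont Ei p" for p using smooth_isCont E1_sm Ei_sm by auto
  moreover have "isCont (\<lambda>x. (0::real, cis x)) x"
    by (rule continuous_on_interior[of UNIV]) (auto intro!: continuous_intros)
  ultimately have "isCont (\<lambda>x. E1 (0, cis x)) x" "isCont (\<lambda>x. Ei (0, cis x)) x"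
    by (auto intro: isCont_o2)
  then show ?thesis unfolding bb_alt[abs_def]
    by (intro continuous_intros)
qed

lemma bb_periodic: "bb (\<phi> + 2 * pi) = bb \<phi>"
  by (simp add: bb_def cis.ctr)

end

lemma m_deriv:
  fixes \<rho> :: "real \<Rightarrow> real" and z :: complex
  assumes z: "z \<noteq> 0" and dr: "(\<rho> has_real_derivative d) (at (norm z - 1))"
  shows "((\<lambda>z. of_real ((1 + \<rho> (norm z - 1)) / norm z) * z) has_derivative
     (\<lambda>h. of_real ((d * (h \<bullet> sgn z) * norm z - (1 + \<rho> (norm z - 1)) * (h \<bullet> sgn z)) / (norm z)^2) * z
         + of_real ((1 + \<rho> (norm z - 1)) / norm z) * h)) (at z)"
proof -
  have n1: "((\<lambda>x. norm x - 1) has_derivative (\<lambda>h. h \<bullet> sgn z)) (at z)"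
    using has_derivative_norm[OF z] by (auto intro!: derivative_eq_intros)
  have k1: "((\<lambda>x. \<rho> (norm x - 1)) has_derivative (\<lambda>h. d * (h \<bullet> sgn z))) (at z)"
    using has_derivative_compose[OF n1 dr[unfolded has_field_derivative_def]] by (simp add: o_def)
  show ?thesis
    apply (rule has_derivative_eq_rhs)
     apply (rule derivative_eq_intros k1 has_derivative_norm[OF z] | simp)+
    using z by (auto simp: field_simps power2_eq_square)
qed

lemma inner_sgn_self: "(z::complex) \<bullet> sgn z = norm z"
proof (cases "z = 0")
  case False
  then show ?thesis
    by (simp add: sgn_div_norm inner_scaleR_right power2_norm_eq_inner[symmetric] power2_eq_square field_simps)
qed simp

context hsetup
begin

lemma cutoff_eq:
  assumes neg: "\<And>r. r \<le> 0 \<Longrightarrow> \<rho> r = r"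
  shows "cutoff_ham H \<rho> t z = H t (of_real ((1 + \<rho> (norm z - 1)) / norm z) * z)"
proof (cases "norm z \<le> 1")
  case True
  show ?thesis
  proof (cases "z = 0")
    case False
    then have "(1 + \<rho> (norm z - 1)) / norm z = 1" using neg[of "norm z - 1"] True by simp
    then show ?thesis using True by (simp add: cutoff_ham_def)
  qed (simp add: cutoff_ham_def)
qed (simp add: cutoff_ham_def)

lemma cutoff_speed:
  fixes \<rho> :: "real \<Rightarrow> real" and z :: complex
  assumes neg: "\<And>r. r \<le> 0 \<Longrightarrow> \<rho> r = r"
    and z: "z \<noteq> 0" and dr: "(\<rho> has_real_derivative d) (at (norm z - 1))"
  shows "Im (cnj z * hamvf (cutoff_ham H \<rho>) t z)
     = - d * dH t (of_real ((1 + \<rho> (norm z - 1)) / norm z) * z) z"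
proof -
  define m where "m z = of_real ((1 + \<rho> (norm z - 1)) / norm z) * z" for z :: complex
  define m' where "m' = (\<lambda>h. of_real ((d * (h \<bullet> sgn z) * norm z - (1 + \<rho> (norm z - 1)) * (h \<bullet> sgn z)) / (norm z)^2) * z
         + of_real ((1 + \<rho> (norm z - 1)) / norm z) * h)"
  have md: "(m has_derivative m') (at z)" unfolding m_def[abs_def] m'_def by (rule m_deriv[OF z dr])
  have ceq: "cutoff_ham H \<rho> t = H t \<circ> m" using cutoff_eq[OF neg] by (auto simp: m_def)
  define D where "D = dH t (m z) \<circ> m'"
  have Dd: "(cutoff_ham H \<rho> t has_derivative D) (at z)"
    unfolding ceq D_def by (rule diff_chain_at[OF md dH_deriv])
  have lin: "linear D" using Dd has_derivative_linear by blast
  have h: "hamvf (cutoff_ham H \<rho>) t z = Complex (D \<i>) (- D 1)" by (rule hamvf_eq[of "cutoff_ham H \<rho>" t D z, OF Dd])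
  have "Im (cnj z * hamvf (cutoff_ham H \<rho>) t z) = - (Re z * D 1 + Im z * D \<i>)"
    unfolding h by (simp add: algebra_simps)
  also have "\<dots> = - D z" using linear_complex_decomp[OF lin, of z] by simp
  also have "m' z = of_real d * z"
  proof -
    have "m' z = of_real ((d * norm z * norm z - (1 + \<rho> (norm z - 1)) * norm z) / (norm z)^2) * z
         + of_real ((1 + \<rho> (norm z - 1)) / norm z) * z" unfolding m'_def inner_sgn_self by simp
    also have "\<dots> = of_real d * z" using z by (simp add: field_simps power2_eq_square)
    finally show ?thesis .
  qed
  then have "D z = d * dH t (m z) z"
    unfolding D_def using dH_lin[of t "m z"] by (simp add: scaleR_conv_of_real[symmetric] linear_scale)
  finally show ?thesis by (simp add: m_def)
qed

lemma est:
  assumes "\<delta> > 0"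
  shows "\<exists>\<eta>>0. \<forall>t u g R. t \<in> {0..1} \<longrightarrow> norm u = 1 \<longrightarrow> 1 \<le> g \<longrightarrow> g \<le> 1 + \<eta> \<longrightarrow> 1 \<le> R \<longrightarrow> R \<le> 1 + \<eta>
      \<longrightarrow> \<bar>dH t (of_real g * u) u / R - dH 0 u u\<bar> \<le> \<delta>"
proof -
  define K where "K = {0..1::real} \<times> cball (0::complex) 2"
  have cK: "compact K" unfolding K_def by (intro compact_Times compact_Icc compact_cball)
  have u1: "uniformly_continuous_on K E1" "uniformly_continuous_on K Ei"
    using compact_uniformly_continuous[OF E1_cont cK] compact_uniformly_continuous[OF Ei_cont cK] by auto
  obtain M1 where M1: "M1 > 0" "\<And>p. p \<in> K \<Longrightarrow> norm (E1 p) \<le> M1"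
    using compact_imp_bounded[OF compact_continuous_image[OF E1_cont cK]] unfolding bounded_pos by auto
  obtain M2 where M2: "M2 > 0" "\<And>p. p \<in> K \<Longrightarrow> norm (Ei p) \<le> M2"
    using compact_imp_bounded[OF compact_continuous_image[OF Ei_cont cK]] unfolding bounded_pos by auto
  define M where "M = M1 + M2"
  have M: "M > 0" using M1 M2 by (simp add: M_def)
  have e4: "\<delta> / 4 > 0" using assms by simp
  obtain d1 where d1: "d1 > 0" "\<And>p q. p \<in> K \<Longrightarrow> q \<in> K \<Longrightarrow> dist q p < d1 \<Longrightarrow> dist (E1 q) (E1 p) < \<delta> / 4"
    using u1(1) e4 unfolding uniformly_continuous_on_def by metis
  obtain d2 where d2: "d2 > 0" "\<And>p q. p \<in> K \<Longrightarrow> q \<in> K \<Longrightarrow> dist q p < d2 \<Longrightarrow> dist (Ei q) (Ei p) < \<delta> / 4"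
    using u1(2) e4 unfolding uniformly_continuous_on_def by metis
  define \<eta> where "\<eta> = min 1 (min (min d1 d2 / 2) (\<delta> / (2 * M)))"
  have \<eta>: "\<eta> > 0" using d1 d2 M assms by (simp add: \<eta>_def)
  show ?thesis
  proof (intro exI[of _ \<eta>] conjI allI impI \<eta>)
    fix t g R :: real and u :: complex
    assume t: "t \<in> {0..1}" and u: "norm u = 1" and g1: "1 \<le> g" and g2: "g \<le> 1 + \<eta>"
      and R1: "1 \<le> R" and R2: "R \<le> 1 + \<eta>"
    define p where "p = (t, of_real g * u)"
    define q where "q = (t, u)"
    have gl: "g \<le> 2" using g2 by (simp add: \<eta>_def)
    have pK: "p \<in> K" using t u g1 gl by (simp add: p_def K_def norm_mult)
    have qK: "q \<in> K" using t u by (simp add: q_def K_def)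
    have "dist p q = norm (of_real g * u - u)" by (simp add: p_def q_def dist_Pair_Pair dist_norm)
    also have "of_real g * u - u = of_real (g - 1) * u" by (simp add: algebra_simps)
    also have "norm (of_real (g - 1) * u) = g - 1" using u g1 by (simp add: norm_mult del: of_real_diff)
    finally have "dist p q < d1" "dist p q < d2" using g2 d1 d2 \<eta> unfolding \<eta>_def by auto
    then have c1: "\<bar>E1 p - E1 q\<bar> < \<delta> / 4" and c2: "\<bar>Ei p - Ei q\<bar> < \<delta> / 4"
      using d1(2)[OF qK pK] d2(2)[OF qK pK] by (auto simp: dist_real_def)
    have ru: "\<bar>Re u\<bar> \<le> 1" "\<bar>Im u\<bar> \<le> 1" using u abs_Re_le_cmod[of u] abs_Im_le_cmod[of u] by simp_all
    have A: "dH t (of_real g * u) u = Re u * E1 p + Im u * Ei p" by (simp add: dH_eq p_def)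
    have B: "dH 0 u u = Re u * E1 q + Im u * Ei q" using aut[OF u, of t u] by (simp add: dH_eq q_def)
    have bA: "\<bar>dH t (of_real g * u) u\<bar> \<le> M"
    proof -
      have "\<bar>Re u\<bar> * \<bar>E1 p\<bar> \<le> 1 * M1"
        by (rule mult_mono) (use ru M1(2)[OF pK] in auto)
      moreover have "\<bar>Im u\<bar> * \<bar>Ei p\<bar> \<le> 1 * M2"
        by (rule mult_mono) (use ru M2(2)[OF pK] in auto)
      ultimately have "\<bar>Re u * E1 p\<bar> \<le> M1" "\<bar>Im u * Ei p\<bar> \<le> M2" by (simp_all add: abs_mult)
      then show ?thesis unfolding A M_def by linarith
    qed
    have dAB: "\<bar>dH t (of_real g * u) u - dH 0 u u\<bar> \<le> \<delta> / 2"
    proof -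
      have "\<bar>Re u\<bar> * \<bar>E1 p - E1 q\<bar> \<le> 1 * (\<delta> / 4)"
        by (rule mult_mono) (use ru c1 in auto)
      moreover have "\<bar>Im u\<bar> * \<bar>Ei p - Ei q\<bar> \<le> 1 * (\<delta> / 4)"
        by (rule mult_mono) (use ru c2 in auto)
      ultimately have "\<bar>Re u * (E1 p - E1 q)\<bar> \<le> \<delta> / 4" "\<bar>Im u * (Ei p - Ei q)\<bar> \<le> \<delta> / 4"
        by (simp_all add: abs_mult)
      moreover have "Re u * E1 p + Im u * Ei p - (Re u * E1 q + Im u * Ei q)
          = Re u * (E1 p - E1 q) + Im u * (Ei p - Ei q)" by (simp add: algebra_simps)
      ultimately show ?thesis unfolding A B by linarith
    qed
    have r: "\<bar>1 / R - 1\<bar> \<le> \<eta>"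
    proof -
      have "\<bar>1 / R - 1\<bar> = (R - 1) / R" using R1 by (simp add: field_simps)
      also have "\<dots> \<le> (R - 1) / 1" by (rule divide_left_mono) (use R1 in auto)
      finally show ?thesis using R2 by simp
    qed
    have "\<bar>dH t (of_real g * u) u * (1 / R - 1)\<bar> \<le> M * \<eta>"
      unfolding abs_mult by (rule mult_mono[OF bA r]) (use M in auto)
    also have "M * \<eta> \<le> \<delta> / 2"
    proof -
      have "\<eta> \<le> \<delta> / (2 * M)" by (simp add: \<eta>_def)
      then show ?thesis using M by (simp add: field_simps)
    qed
    finally have "\<bar>dH t (of_real g * u) u * (1 / R - 1)\<bar> \<le> \<delta> / 2" .
    moreover have "dH t (of_real g * u) u / R - dH 0 u u
        = dH t (of_real g * u) u * (1 / R - 1) + (dH t (of_real g * u) u - dH 0 u u)"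
      by (simp add: algebra_simps)
    ultimately show "\<bar>dH t (of_real g * u) u / R - dH 0 u u\<bar> \<le> \<delta>" using dAB by linarith
  qed
qed

end

lemma div_cnj_aux: "(x::complex) \<noteq> 0 \<Longrightarrow> X / x = cnj x * X / (x * cnj x)"
  by (simp add: mult.commute[of x "cnj x"])
lemma cancel_aux: "(R::real) \<ge> 1 \<Longrightarrow> - c * (R * B) / R^2 = - c * (B / R)"
  by (simp add: power2_eq_square)
lemma ratio_aux: "(P::real) > 0 \<Longrightarrow> \<bar>c * A\<bar> \<le> P \<Longrightarrow> \<bar>1 / P * (- c * A)\<bar> \<le> 1"
  by (simp add: abs_mult)
lemma wind_aux: "\<bar>a\<bar> < 2 * pi \<Longrightarrow> \<bar>a / (2 * pi)\<bar> < 1"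
  by (simp add: abs_divide)

lemma mvt_bound1:
  fixes f :: "real \<Rightarrow> real"
  assumes fd: "\<And>t. t \<in> {0..1} \<Longrightarrow> (f has_real_derivative f' t) (at t within {0..1})"
    and b: "\<And>t. t \<in> {0..1} \<Longrightarrow> \<bar>f' t\<bar> \<le> 1"
  shows "\<bar>f 1 - f 0\<bar> \<le> 1"
proof -
  have cf: "continuous_on {0..1} f"
    unfolding continuous_on_eq_continuous_within using fd DERIV_continuous by blast
  have at: "at t within {0..1} = at t" if "0 < t" "t < 1" for t :: real
    using at_within_Icc_at[OF that] .
  have "(\<lambda>t. t - f t) 0 \<le> (\<lambda>t. t - f t) 1"
  proof (rule DERIV_nonneg_imp_increasing_open[where f="\<lambda>t. t - f t"])
    fix t :: real assume t: "0 < t" "t < 1"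
    have "((\<lambda>t. t - f t) has_real_derivative 1 - f' t) (at t)"
      using fd[of t] t at[OF t] by (auto intro!: derivative_eq_intros)
    then show "\<exists>y. ((\<lambda>t. t - f t) has_real_derivative y) (at t) \<and> 0 \<le> y"
      using b[of t] t by force
  qed (auto intro!: continuous_intros cf)
  moreover have "(\<lambda>t. t + f t) 0 \<le> (\<lambda>t. t + f t) 1"
  proof (rule DERIV_nonneg_imp_increasing_open[where f="\<lambda>t. t + f t"])
    fix t :: real assume t: "0 < t" "t < 1"
    have "((\<lambda>t. t + f t) has_real_derivative 1 + f' t) (at t)"
      using fd[of t] t at[OF t] by (auto intro!: derivative_eq_intros)
    then show "\<exists>y. ((\<lambda>t. t + f t) has_real_derivative y) (at t) \<and> 0 \<le> y"
      using b[of t] t by force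
  qed (auto intro!: continuous_intros cf)
  ultimately show ?thesis by simp
qed

context hsetup
begin

lemma traj_bound:
  fixes \<delta> \<eta> e :: real and \<rho> \<rho>' \<Theta> :: "real \<Rightarrow> real" and x :: "real \<Rightarrow> complex"
  assumes \<delta>: "\<delta> > 0"
    and est: "\<And>t u g R. t \<in> {0..1} \<Longrightarrow> norm u = 1 \<Longrightarrow> 1 \<le> g \<Longrightarrow> g \<le> 1 + \<eta> \<Longrightarrow> 1 \<le> R \<Longrightarrow> R \<le> 1 + \<eta>
      \<Longrightarrow> \<bar>dH t (of_real g * u) u / R - dH 0 u u\<bar> \<le> \<delta>"
    and \<Theta>d: "\<And>y. (\<Theta> has_real_derivative 1 / (\<bar>bb y\<bar> + \<delta>)) (at y)"
    and \<Theta>p: "\<And>y. \<Theta> (y + 2 * pi) - \<Theta> y > 1"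
    and \<rho>d: "\<And>r. (\<rho> has_real_derivative \<rho>' r) (at r)"
    and \<rho>neg: "\<And>r. r \<le> 0 \<Longrightarrow> \<rho> r = r"
    and \<rho>far: "\<And>r. r \<ge> e \<Longrightarrow> \<rho> r = 0"
    and \<rho>nn: "\<And>r. r \<ge> 0 \<Longrightarrow> \<rho> r \<ge> 0"
    and \<rho>bd: "\<And>r. r \<ge> 0 \<Longrightarrow> \<rho> r \<le> e"
    and \<rho>'bd: "\<And>r. r \<ge> 0 \<Longrightarrow> \<bar>\<rho>' r\<bar> \<le> 1"
    and e\<eta>: "e \<le> \<eta>"
    and xd: "\<forall>t\<in>{0..1}. (x has_vector_derivative hamvf (cutoff_ham H \<rho>) t (x t)) (at t within {0..1})"
    and xn: "\<forall>t\<in>{0..1}. norm (x t) \<ge> 1"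
  shows "\<bar>wind x\<bar> < 1"
proof -
  define X where "X t = hamvf (cutoff_ham H \<rho>) t (x t)" for t
  have nz: "x t \<noteq> 0" if "t \<in> {0..1}" for t using xn that by force
  have xd': "(x has_vector_derivative X t) (at t within {0..1})" if "t \<in> {0..1}" for t
    using xd that by (simp add: X_def)
  obtain \<phi> where c\<phi>: "continuous_on {0..1} \<phi>"
    and xeq: "\<And>t. t \<in> {0..1} \<Longrightarrow> x t = of_real (norm (x t)) * cis (\<phi> t)"
    and \<phi>d: "\<And>t. t \<in> {0..1} \<Longrightarrow> (\<phi> has_real_derivative Im (X t / x t)) (at t within {0..1})"
    using angle_lift[of x X, OF xd' nz] by blast
  have w: "wind x = (\<phi> 1 - \<phi> 0) / (2 * pi)" by (rule wind_eq[OF c\<phi> xeq nz])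
  have kb: "\<bar>1 / (\<bar>bb (\<phi> t)\<bar> + \<delta>) * Im (X t / x t)\<bar> \<le> 1" if t: "t \<in> {0..1}" for t
  proof -
    define R where "R = norm (x t)"
    define u where "u = cis (\<phi> t)"
    define g where "g = 1 + \<rho> (R - 1)"
    have R1: "R \<ge> 1" using xn t by (simp add: R_def)
    have xt: "x t = of_real R * u" using xeq[OF t] by (simp add: R_def u_def)
    have u1: "norm u = 1" by (simp add: u_def)
    have bbu: "bb (\<phi> t) = dH 0 u u" by (simp add: bb_def u_def)
    have "X t / x t = cnj (x t) * X t / (x t * cnj (x t))" using nz[OF t] by (rule div_cnj_aux)
    also have "x t * cnj (x t) = of_real (R^2)" using complex_norm_square[of "x t"] by (simp add: R_def)
    finally have "Im (X t / x t) = Im (cnj (x t) * X t) / R^2" by (simp add: Im_divide_of_real)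
    also have "Im (cnj (x t) * X t) = - \<rho>' (R - 1) * dH t (of_real ((1 + \<rho> (R - 1)) / R) * x t) (x t)"
      unfolding X_def R_def by (rule cutoff_speed[OF \<rho>neg nz[OF t] \<rho>d])
    also have "of_real ((1 + \<rho> (R - 1)) / R) * x t = of_real g * u"
      using R1 by (simp add: xt g_def)
    also have "dH t (of_real g * u) (x t) = R * dH t (of_real g * u) u"
      using dH_lin[of t "of_real g * u"] by (simp add: xt scaleR_conv_of_real[symmetric] linear_scale)
    finally have im: "Im (X t / x t) = - \<rho>' (R - 1) * (dH t (of_real g * u) u / R)"
      using cancel_aux[OF R1] by simp
    define A where "A = dH t (of_real g * u) u / R"
    have main: "\<bar>\<rho>' (R - 1) * A\<bar> \<le> \<bar>bb (\<phi> t)\<bar> + \<delta>"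
    proof (cases "R - 1 > e")
      case True
      have "\<rho>' (R - 1) = 0"
      proof (rule DERIV_local_const[OF \<rho>d])
        show "0 < R - 1 - e" using True by simp
        show "\<forall>y. \<bar>R - 1 - y\<bar> < R - 1 - e \<longrightarrow> \<rho> (R - 1) = \<rho> y"
          using True \<rho>far by auto
      qed
      then show ?thesis using \<delta> by simp
    next
      case False
      have g1: "1 \<le> g" using \<rho>nn[of "R - 1"] R1 by (simp add: g_def)
      have g2: "g \<le> 1 + \<eta>" using \<rho>bd[of "R - 1"] R1 e\<eta> by (simp add: g_def)
      have R2: "R \<le> 1 + \<eta>" using False e\<eta> by simp
      have "\<bar>A - bb (\<phi> t)\<bar> \<le> \<delta>" unfolding A_def bbu by (rule est[OF t u1 g1 g2 R1 R2])
      then have "\<bar>A\<bar> \<le> \<bar>bb (\<phi> t)\<bar> + \<delta>" by linarith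
      moreover have "\<bar>\<rho>' (R - 1)\<bar> \<le> 1" using \<rho>'bd R1 by simp
      ultimately have "\<bar>\<rho>' (R - 1)\<bar> * \<bar>A\<bar> \<le> 1 * (\<bar>bb (\<phi> t)\<bar> + \<delta>)"
        by (intro mult_mono) auto
      then show ?thesis by (simp add: abs_mult)
    qed
    have pos: "\<bar>bb (\<phi> t)\<bar> + \<delta> > 0" using \<delta> by simp
    show ?thesis unfolding im A_def[symmetric] using ratio_aux[OF pos main] .
  qed
  have \<Theta>\<phi>d: "((\<lambda>t. \<Theta> (\<phi> t)) has_real_derivative 1 / (\<bar>bb (\<phi> t)\<bar> + \<delta>) * Im (X t / x t)) (at t within {0..1})"
    if "t \<in> {0..1}" for t
    by (rule DERIV_chain'[OF \<phi>d[OF that] \<Theta>d])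
  have b1: "\<bar>\<Theta> (\<phi> 1) - \<Theta> (\<phi> 0)\<bar> \<le> 1"
    by (rule mvt_bound1[where f="\<lambda>t. \<Theta> (\<phi> t)", OF \<Theta>\<phi>d kb])
  have mono: "\<Theta> a \<le> \<Theta> b" if "a \<le> b" for a b
  proof (rule DERIV_nonneg_imp_nondecreasing[OF that])
    fix y show "\<exists>d. (\<Theta> has_real_derivative d) (at y) \<and> 0 \<le> d"
      using \<Theta>d[of y] \<delta> by (intro exI[of _ "1 / (\<bar>bb y\<bar> + \<delta>)"]) simp
  qed
  have "\<bar>\<phi> 1 - \<phi> 0\<bar> < 2 * pi"
  proof (rule ccontr)
    assume "\<not> ?thesis"
    then consider "\<phi> 1 \<ge> \<phi> 0 + 2 * pi" | "\<phi> 1 \<le> \<phi> 0 - 2 * pi" by linarith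
    then show False
    proof cases
      case 1
      then have "\<Theta> (\<phi> 0 + 2 * pi) \<le> \<Theta> (\<phi> 1)" by (rule mono)
      then show False using \<Theta>p[of "\<phi> 0"] b1 by linarith
    next
      case 2
      then have "\<Theta> (\<phi> 1) \<le> \<Theta> (\<phi> 0 - 2 * pi)" by (rule mono)
      then show False using \<Theta>p[of "\<phi> 0 - 2 * pi"] b1 by simp
    qed
  qed
  then show ?thesis unfolding w by (rule wind_aux)
qed

end

lemma period_shift:
  fixes f \<Theta> :: "real \<Rightarrow> real"
  assumes \<Theta>d: "\<And>y. (\<Theta> has_real_derivative f y) (at y)" and fp: "\<And>y. f (y + p) = f y"
  shows "\<Theta> (y + p) - \<Theta> y = \<Theta> (z + p) - \<Theta> z"
proof -
  have "((\<lambda>y. \<Theta> (y + p) - \<Theta> y) has_real_derivative 0) (at y)" for y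
  proof -
    have "((\<lambda>y. y + p) has_real_derivative 1) (at y)" by (auto intro!: derivative_eq_intros)
    from DERIV_chain'[OF this \<Theta>d]
    have "((\<lambda>y. \<Theta> (y + p)) has_real_derivative f (y + p) * 1) (at y)" .
    from DERIV_diff[OF this \<Theta>d[of y]] show ?thesis using fp by simp
  qed
  then show ?thesis using DERIV_isconst_all[of "\<lambda>y. \<Theta> (y + p) - \<Theta> y"] by blast
qed

context hsetup
begin

lemma bb_differentiable: "bb differentiable (at y)"
proof -
  have "E1 differentiable (at p)" "Ei differentiable (at p)" for p
    using E1_sm Ei_sm by (metis smooth_E differentiableI)+
  moreover have c: "(\<lambda>x. (0::real, cis x)) differentiable (at y)"
    by (rule differentiableI, rule has_derivative_Pair[OF has_derivative_const has_derivative_cis[OF has_derivative_ident]])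
  ultimately have "(E1 \<circ> (\<lambda>x. (0::real, cis x))) differentiable (at y)" "(Ei \<circ> (\<lambda>x. (0::real, cis x))) differentiable (at y)"
    by (auto intro: differentiable_chain_at[OF c])
  then have "(\<lambda>x. E1 (0, cis x)) differentiable (at y)" "(\<lambda>x. Ei (0, cis x)) differentiable (at y)"
    by (simp_all add: o_def)
  moreover have "(\<lambda>x. cos x) differentiable (at y)" "(\<lambda>x. sin x) differentiable (at y)"
    using DERIV_cos[of y] DERIV_sin[of y] by (auto simp: has_field_derivative_def differentiable_def)
  ultimately show ?thesis unfolding bb_alt[abs_def]
    by (intro differentiable_add differentiable_mult) auto
qed

lemma bb_deriv: obtains L0 where "(bb has_real_derivative L0) (at y)"
  using bb_differentiable DERIV_deriv_iff_real_differentiable by blast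

lemma theta_antideriv:
  assumes "\<delta> > 0"
  obtains \<Theta> where "\<And>y. (\<Theta> has_real_derivative 1 / (\<bar>bb y\<bar> + \<delta>)) (at y)"
proof -
  have "isCont (\<lambda>y. 1 / (\<bar>bb y\<bar> + \<delta>)) y" for y
    using assms bb_isCont[of y] by (intro continuous_intros) (auto simp: add_pos_nonneg)
  then show ?thesis using antideriv_exists that by blast
qed

lemma theta_mono:
  assumes "\<delta> > 0" and \<Theta>d: "\<And>y. (\<Theta> has_real_derivative 1 / (\<bar>bb y\<bar> + \<delta>)) (at y)" and "a \<le> b"
  shows "\<Theta> a \<le> \<Theta> b"
proof (rule DERIV_nonneg_imp_nondecreasing[OF assms(3)])
  fix y show "\<exists>d. (\<Theta> has_real_derivative d) (at y) \<and> 0 \<le> d"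
    using \<Theta>d[of y] assms(1) by (intro exI[of _ "1 / (\<bar>bb y\<bar> + \<delta>)"]) simp
qed

lemma zero_case:
  assumes z: "bb y0 = 0"
  shows "\<exists>\<delta>>0. \<exists>\<Theta>. (\<forall>y. (\<Theta> has_real_derivative 1 / (\<bar>bb y\<bar> + \<delta>)) (at y)) \<and> \<Theta> (y0 + 2 * pi) - \<Theta> y0 > 1"
proof -
  obtain L0 where L0: "(bb has_real_derivative L0) (at y0)" using bb_deriv by blast
  define L where "L = \<bar>L0\<bar> + 1"
  have Lp: "L > 0" by (simp add: L_def add_nonneg_pos)
  have "((\<lambda>y. (bb y - bb y0) / (y - y0)) \<midarrow>y0\<rightarrow> L0)"
    using L0 unfolding has_field_derivative_iff .
  from LIM_D[OF this, of 1] obtain s where s: "s > 0"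
    and sb: "\<And>y. y \<noteq> y0 \<Longrightarrow> norm (y - y0) < s \<Longrightarrow> norm ((bb y - bb y0) / (y - y0) - L0) < 1"
    by auto
  have bnd: "\<bar>bb y\<bar> \<le> L * (y - y0)" if "y0 \<le> y" "y - y0 < s" for y
  proof (cases "y = y0")
    case True then show ?thesis using z by simp
  next
    case False
    then have yp: "y - y0 > 0" using that by simp
    have "\<bar>bb y / (y - y0) - L0\<bar> < 1" using sb[OF False] that z by simp
    then have "\<bar>bb y / (y - y0)\<bar> \<le> L" unfolding L_def by linarith
    then have "\<bar>bb y\<bar> / (y - y0) \<le> L" using yp by (simp add: abs_divide)
    then show ?thesis using yp by (simp add: divide_le_eq)
  qed
  define r where "r = min (s / 2) 1"
  have r: "r > 0" "r < s" "r \<le> 1" using s by (auto simp: r_def)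
  define \<delta> where "\<delta> = L * r / exp L"
  have \<delta>: "\<delta> > 0" using Lp r by (simp add: \<delta>_def)
  obtain \<Theta> where \<Theta>d: "\<And>y. (\<Theta> has_real_derivative 1 / (\<bar>bb y\<bar> + \<delta>)) (at y)"
    using theta_antideriv[OF \<delta>] by blast
  have "(\<lambda>y. \<Theta> y - ln (L * (y - y0) + \<delta>) / L) y0 \<le> (\<lambda>y. \<Theta> y - ln (L * (y - y0) + \<delta>) / L) (y0 + r)"
  proof (rule DERIV_nonneg_imp_nondecreasing[where f="\<lambda>y. \<Theta> y - ln (L * (y - y0) + \<delta>) / L"])
    show "y0 \<le> y0 + r" using r by simp
    fix y assume y: "y0 \<le> y" "y \<le> y0 + r"
    have pos: "L * (y - y0) + \<delta> > 0" using y Lp \<delta> by (simp add: add_nonneg_pos)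
    have "((\<lambda>y. L * (y - y0) + \<delta>) has_real_derivative L) (at y)"
      by (auto intro!: derivative_eq_intros)
    from DERIV_chain'[OF this DERIV_ln_divide[OF pos]]
    have "((\<lambda>y. ln (L * (y - y0) + \<delta>)) has_real_derivative 1 / (L * (y - y0) + \<delta>) * L) (at y)" .
    from DERIV_diff[OF \<Theta>d DERIV_cdivide[OF this, of L]]
    have d: "((\<lambda>y. \<Theta> y - ln (L * (y - y0) + \<delta>) / L) has_real_derivative
        1 / (\<bar>bb y\<bar> + \<delta>) - (L / (L * (y - y0) + \<delta>)) / L) (at y)" by simp
    have "\<bar>bb y\<bar> + \<delta> \<le> L * (y - y0) + \<delta>" using bnd[of y] y r by simp
    then have "1 / (L * (y - y0) + \<delta>) \<le> 1 / (\<bar>bb y\<bar> + \<delta>)"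
      using \<delta> by (intro divide_left_mono) (auto simp: add_nonneg_pos)
    moreover have "(L / (L * (y - y0) + \<delta>)) / L = 1 / (L * (y - y0) + \<delta>)" using Lp by simp
    ultimately show "\<exists>d. ((\<lambda>y. \<Theta> y - ln (L * (y - y0) + \<delta>) / L) has_real_derivative d) (at y) \<and> 0 \<le> d"
      using d by (intro exI[of _ "1 / (\<bar>bb y\<bar> + \<delta>) - (L / (L * (y - y0) + \<delta>)) / L"]) simp
  qed
  then have A: "\<Theta> (y0 + r) - \<Theta> y0 \<ge> (ln (L * r + \<delta>) - ln \<delta>) / L"
    by (simp add: diff_divide_distrib)
  have "ln (L * r + \<delta>) - ln \<delta> = ln ((L * r + \<delta>) / \<delta>)"
  proof -
    have "L * r + \<delta> > 0" using \<delta> Lp r by (simp add: add_pos_pos)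
    then show ?thesis using ln_div[of "L * r + \<delta>" \<delta>] \<delta> by simp
  qed
  also have "(L * r + \<delta>) / \<delta> = exp L + 1" using \<delta> Lp r by (simp add: \<delta>_def field_simps)
  also have "ln (exp L + 1) > ln (exp L)"
    using ln_less_cancel_iff[of "exp L" "exp L + 1"] by (simp add: add_pos_pos)
  finally have "(ln (L * r + \<delta>) - ln \<delta>) / L > 1" using Lp by simp
  moreover have "\<Theta> (y0 + r) \<le> \<Theta> (y0 + 2 * pi)"
    using theta_mono[OF \<delta> \<Theta>d, of "y0 + r" "y0 + 2 * pi"] r pi_gt3 by simp
  ultimately show ?thesis using A \<delta> \<Theta>d by (intro exI[of _ \<delta>] conjI exI[of _ \<Theta>]) auto
qed

end

lemma smooth_lip:
  fixes f :: "real \<times> complex \<Rightarrow> real"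
  assumes "smooth f"
  shows "\<exists>L. \<forall>s z w. \<bar>s\<bar> \<le> T \<longrightarrow> norm z \<le> Rb \<longrightarrow> norm w \<le> Rb \<longrightarrow> \<bar>f (s, z) - f (s, w)\<bar> \<le> L * norm (z - w)"
proof -
  obtain f' where fd: "\<And>x. (f has_derivative f' x) (at x)" and fs: "\<And>v. smooth (\<lambda>x. f' x v)"
    using smooth_E[OF assms] by blast
  define K where "K = {-T..T} \<times> cball (0::complex) Rb"
  have cK: "compact K" unfolding K_def by (intro compact_Times compact_Icc compact_cball)
  have c1: "continuous_on K (\<lambda>p. f' p (0, 1))" and c2: "continuous_on K (\<lambda>p. f' p (0, \<i>))"
    using smooth_cont fs by blast+
  obtain M1 where M1: "M1 > 0" "\<And>p. p \<in> K \<Longrightarrow> norm (f' p (0, 1)) \<le> M1"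
    using compact_imp_bounded[OF compact_continuous_image[OF c1 cK]] unfolding bounded_pos by auto
  obtain M2 where M2: "M2 > 0" "\<And>p. p \<in> K \<Longrightarrow> norm (f' p (0, \<i>)) \<le> M2"
    using compact_imp_bounded[OF compact_continuous_image[OF c2 cK]] unfolding bounded_pos by auto
  show ?thesis
  proof (intro exI[of _ "M1 + M2"] allI impI)
    fix s :: real and z w :: complex assume s: "\<bar>s\<bar> \<le> T" and z: "norm z \<le> Rb" and w: "norm w \<le> Rb"
    have gd: "((\<lambda>z. f (s, z)) has_derivative (\<lambda>h. f' (s, z) (0, h))) (at z within cball 0 Rb)" for z
    proof -
      have i: "((\<lambda>z. (s, z)) has_derivative (\<lambda>h. (0, h))) (at z)"
        by (auto intro!: derivative_eq_intros)
      have "(f \<circ> (\<lambda>z. (s, z)) has_derivative f' (s, z) \<circ> (\<lambda>h. (0, h))) (at z)"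
        by (rule diff_chain_at[OF i fd])
      then show ?thesis by (simp add: o_def has_derivative_at_withinI)
    qed
    have ob: "onorm (\<lambda>h. f' (s, z) (0, h)) \<le> M1 + M2" if "z \<in> cball 0 Rb" for z
    proof (rule onorm_le)
      fix h :: complex
      have lin: "linear (f' (s, z))" using fd has_derivative_linear by blast
      have "(0::real, h) = Re h *\<^sub>R (0, 1) + Im h *\<^sub>R (0, \<i>)" by (simp add: complex_eq_iff)
      then have "f' (s, z) (0, h) = f' (s, z) (Re h *\<^sub>R (0, 1) + Im h *\<^sub>R (0, \<i>))" by metis
      also have "\<dots> = Re h *\<^sub>R f' (s, z) (0, 1) + Im h *\<^sub>R f' (s, z) (0, \<i>)"
        by (simp only: linear_add[OF lin] linear_scale[OF lin])
      finally have eq: "f' (s, z) (0, h) = Re h * f' (s, z) (0, 1) + Im h * f' (s, z) (0, \<i>)" by simp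
      have pK: "(s, z) \<in> K" using s that by (simp add: K_def abs_le_iff)
      have "\<bar>Re h\<bar> * \<bar>f' (s, z) (0, 1)\<bar> \<le> norm h * M1"
        by (rule mult_mono) (use abs_Re_le_cmod[of h] M1(2)[OF pK] in auto)
      moreover have "\<bar>Im h\<bar> * \<bar>f' (s, z) (0, \<i>)\<bar> \<le> norm h * M2"
        by (rule mult_mono) (use abs_Im_le_cmod[of h] M2(2)[OF pK] in auto)
      ultimately have "\<bar>Re h * f' (s, z) (0, 1)\<bar> + \<bar>Im h * f' (s, z) (0, \<i>)\<bar> \<le> (M1 + M2) * norm h"
        by (simp add: abs_mult algebra_simps)
      then show "norm (f' (s, z) (0, h)) \<le> (M1 + M2) * norm h"
        unfolding eq real_norm_def by linarith
    qed
    have "norm ((\<lambda>z. f (s, z)) z - (\<lambda>z. f (s, z)) w) \<le> (M1 + M2) * norm (z - w)"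
      by (rule differentiable_bound[OF convex_cball gd ob]) (use z w in auto)
    then show "\<bar>f (s, z) - f (s, w)\<bar> \<le> (M1 + M2) * norm (z - w)" by simp
  qed
qed

lemma ode_unique:
  fixes V :: "real \<Rightarrow> complex \<Rightarrow> complex" and x y :: "real \<Rightarrow> complex"
  assumes lip: "\<And>T Rb. \<exists>L. \<forall>s z w. \<bar>s\<bar> \<le> T \<longrightarrow> norm z \<le> Rb \<longrightarrow> norm w \<le> Rb \<longrightarrow> norm (V s z - V s w) \<le> L * norm (z - w)"
    and xd: "\<And>s. (x has_vector_derivative V s (x s)) (at s)"
    and yd: "\<And>s. (y has_vector_derivative V s (y s)) (at s)"
    and x0: "x 0 = y 0"
  shows "x t = y t"
proof -
  define T where "T = \<bar>t\<bar>"
  have cx: "continuous_on {-T..T} x" and cy: "continuous_on {-T..T} y"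
    using xd yd by (auto intro!: continuous_at_imp_continuous_on has_vector_derivative_continuous)
  obtain R1 where "\<forall>v \<in> x ` {-T..T}. norm v \<le> R1"
    using compact_imp_bounded[OF compact_continuous_image[OF cx compact_Icc]] unfolding bounded_iff by blast
  then have R1: "\<And>s. s \<in> {-T..T} \<Longrightarrow> norm (x s) \<le> R1" by blast
  obtain R2 where "\<forall>v \<in> y ` {-T..T}. norm v \<le> R2"
    using compact_imp_bounded[OF compact_continuous_image[OF cy compact_Icc]] unfolding bounded_iff by blast
  then have R2: "\<And>s. s \<in> {-T..T} \<Longrightarrow> norm (y s) \<le> R2" by blast
  obtain L0 where L0: "\<And>s z w. \<bar>s\<bar> \<le> T \<Longrightarrow> norm z \<le> max R1 R2 \<Longrightarrow> norm w \<le> max R1 R2 \<Longrightarrow> norm (V s z - V s w) \<le> L0 * norm (z - w)"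
    using lip[of T "max R1 R2"] by blast
  define L where "L = max L0 0"
  have L: "L \<ge> 0" by (simp add: L_def)
  define d where "d s = x s - y s" for s
  define d' where "d' s = V s (x s) - V s (y s)" for s
  have dd: "(d has_vector_derivative d' s) (at s)" for s
    unfolding d_def d'_def by (intro derivative_intros xd yd)
  define w where "w s = Re (d s) * Re (d s) + Im (d s) * Im (d s)" for s
  define w' where "w' s = 2 * Re (cnj (d s) * d' s)" for s
  have wd: "(w has_real_derivative w' s) (at s)" for s
  proof -
    have "((\<lambda>s. Re (d s)) has_real_derivative Re (d' s)) (at s)" "((\<lambda>s. Im (d s)) has_real_derivative Im (d' s)) (at s)"
      using dd[of s] by (auto intro: has_field_derivative_Re has_field_derivative_Im)
    then show ?thesis unfolding w_def[abs_def] w'_def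
      by (auto intro!: derivative_eq_intros dd simp: algebra_simps)
  qed
  have wn: "w s = (norm (d s))^2" for s unfolding cmod_power2 w_def by (simp add: power2_eq_square)
  have w0: "w 0 = 0" by (simp add: w_def d_def x0)
  have wge: "w s \<ge> 0" for s by (simp add: wn)
  have wb: "\<bar>w' s\<bar> \<le> 2 * L * w s" if "s \<in> {-T..T}" for s
  proof -
    have "norm (d' s) \<le> L0 * norm (d s)"
      unfolding d'_def d_def
    proof (rule L0)
      show "\<bar>s\<bar> \<le> T" using that by (simp add: abs_le_iff)
      show "norm (x s) \<le> max R1 R2" using R1[OF that] by linarith
      show "norm (y s) \<le> max R1 R2" using R2[OF that] by linarith
    qed
    also have "\<dots> \<le> L * norm (d s)" by (rule mult_right_mono) (auto simp: L_def)
    finally have n: "norm (d' s) \<le> L * norm (d s)" .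
    have "\<bar>Re (cnj (d s) * d' s)\<bar> \<le> norm (cnj (d s) * d' s)" by (rule abs_Re_le_cmod)
    also have "\<dots> = norm (d s) * norm (d' s)" by (simp add: norm_mult)
    also have "\<dots> \<le> norm (d s) * (L * norm (d s))" by (rule mult_left_mono[OF n]) simp
    finally have h: "\<bar>Re (cnj (d s) * d' s)\<bar> \<le> norm (d s) * (L * norm (d s))" .
    have e1: "\<bar>w' s\<bar> = 2 * \<bar>Re (cnj (d s) * d' s)\<bar>" by (simp only: w'_def abs_mult)
    have e2: "2 * L * w s = 2 * (norm (d s) * (L * norm (d s)))" by (simp add: wn power2_eq_square algebra_simps)
    show ?thesis unfolding e1 e2 using h by linarith
  qed
  have "w t = 0"
  proof (cases "t \<ge> 0")
    case True
    define f where "f s = exp (- 2 * L * s) * w s" for s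
    have "f t \<le> f 0"
    proof (rule DERIV_nonpos_imp_nonincreasing[where f=f])
      show "0 \<le> t" using True .
      fix s assume s: "0 \<le> s" "s \<le> t"
      have "(f has_real_derivative exp (- 2 * L * s) * (w' s - 2 * L * w s)) (at s)"
        unfolding f_def by (auto intro!: derivative_eq_intros wd simp: algebra_simps)
      moreover have "exp (- 2 * L * s) * (w' s - 2 * L * w s) \<le> 0"
        using wb[of s] s True by (intro mult_nonneg_nonpos) (auto simp: T_def)
      ultimately show "\<exists>y. (f has_real_derivative y) (at s) \<and> y \<le> 0" by blast
    qed
    then have "exp (- 2 * L * t) * w t \<le> 0" by (simp add: f_def w0)
    then show ?thesis using wge[of t] by (simp add: mult_le_0_iff)
  next
    case False
    define f where "f s = exp (2 * L * s) * w s" for s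
    have "f t \<le> f 0"
    proof (rule DERIV_nonneg_imp_nondecreasing[where f=f])
      show "t \<le> 0" using False by simp
      fix s assume s: "t \<le> s" "s \<le> 0"
      have "(f has_real_derivative exp (2 * L * s) * (w' s + 2 * L * w s)) (at s)"
        unfolding f_def by (auto intro!: derivative_eq_intros wd simp: algebra_simps)
      moreover have "exp (2 * L * s) * (w' s + 2 * L * w s) \<ge> 0"
        using wb[of s] s False by (intro mult_nonneg_nonneg) (auto simp: T_def)
      ultimately show "\<exists>y. (f has_real_derivative y) (at s) \<and> y \<ge> 0" by blast
    qed
    then have "exp (2 * L * t) * w t \<le> 0" by (simp add: f_def w0)
    then show ?thesis using wge[of t] by (simp add: mult_le_0_iff)
  qed
  then show ?thesis by (simp add: wn d_def)
qed

context hsetup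
begin

lemma hamvf_lip:
  "\<exists>L. \<forall>s z w. \<bar>s\<bar> \<le> T \<longrightarrow> norm z \<le> Rb \<longrightarrow> norm w \<le> Rb \<longrightarrow> norm (hamvf H s z - hamvf H s w) \<le> L * norm (z - w)"
proof -
  obtain L1 where L1: "\<forall>s z w. \<bar>s\<bar> \<le> T \<longrightarrow> norm z \<le> Rb \<longrightarrow> norm w \<le> Rb \<longrightarrow> \<bar>E1 (s, z) - E1 (s, w)\<bar> \<le> L1 * norm (z - w)"
    using smooth_lip[OF E1_sm] by blast
  obtain L2 where L2: "\<forall>s z w. \<bar>s\<bar> \<le> T \<longrightarrow> norm z \<le> Rb \<longrightarrow> norm w \<le> Rb \<longrightarrow> \<bar>Ei (s, z) - Ei (s, w)\<bar> \<le> L2 * norm (z - w)"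
    using smooth_lip[OF Ei_sm] by blast
  show ?thesis
  proof (intro exI[of _ "L1 + L2"] allI impI)
    fix s :: real and z w :: complex assume a: "\<bar>s\<bar> \<le> T" "norm z \<le> Rb" "norm w \<le> Rb"
    have "norm (hamvf H s z - hamvf H s w) \<le> \<bar>Re (hamvf H s z - hamvf H s w)\<bar> + \<bar>Im (hamvf H s z - hamvf H s w)\<bar>"
      by (rule cmod_le)
    also have "\<dots> = \<bar>Ei (s, z) - Ei (s, w)\<bar> + \<bar>E1 (s, z) - E1 (s, w)\<bar>"
      by (simp add: hamvf_H abs_minus_commute)
    also have "\<dots> \<le> L2 * norm (z - w) + L1 * norm (z - w)" using L1 L2 a by (intro add_mono) auto
    finally show "norm (hamvf H s z - hamvf H s w) \<le> (L1 + L2) * norm (z - w)" by (simp add: algebra_simps)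
  qed
qed

lemma flow_eq:
  assumes xd: "\<And>s. (x has_vector_derivative hamvf H s (x s)) (at s)"
  shows "flow H t (x 0) = x t"
proof -
  have "(THE y. y 0 = x 0 \<and> (\<forall>s. (y has_vector_derivative hamvf H s (y s)) (at s))) = x"
  proof (rule the_equality)
    show "x 0 = x 0 \<and> (\<forall>s. (x has_vector_derivative hamvf H s (x s)) (at s))" using xd by simp
    fix y assume y: "y 0 = x 0 \<and> (\<forall>s. (y has_vector_derivative hamvf H s (y s)) (at s))"
    show "y = x"
    proof
      fix t show "y t = x t"
        by (rule ode_unique[of "hamvf H", OF hamvf_lip]) (use y xd in auto)
    qed
  qed
  then show ?thesis by (simp add: flow_def)
qed

lemma bb_sign:
  assumes nz: "\<And>y. bb y \<noteq> 0"
  shows "bb y > 0 \<longleftrightarrow> bb 0 > 0"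
proof -
  have c: "continuous_on S bb" for S using bb_isCont by (simp add: continuous_at_imp_continuous_on)
  have False if ab: "bb a > 0" "bb b < 0" for a b
  proof (cases "a \<le> b")
    case True
    then obtain x where "bb x = 0" using IVT2'[of bb b 0 a, OF _ _ True c] ab by force
    then show False using nz by blast
  next
    case False
    then obtain x where "bb x = 0" using IVT'[of bb b 0 a, OF _ _ _ c] ab by force
    then show False using nz by blast
  qed
  then show ?thesis using nz[of y] nz[of 0] by (metis linorder_neqE_linordered_idom)
qed

end

locale nzsetup = hsetup +
  fixes P :: "real \<Rightarrow> real"
  assumes nz: "\<And>y. bb y \<noteq> 0"
    and Pd: "\<And>y. (P has_real_derivative 1 / bb y) (at y)"
    and P0: "P 0 = 0"
begin

definition \<sigma> :: real where "\<sigma> = (if bb 0 > 0 then 1 else -1)"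
definition T :: real where "T = P (2 * pi)"
definition \<tau> :: "real \<Rightarrow> real" where "\<tau> y = \<sigma> * P y"

lemma \<sigma>_bb: "\<sigma> * bb y = \<bar>bb y\<bar>"
  using bb_sign[OF nz, of y] nz[of y] by (auto simp: \<sigma>_def)

lemma \<sigma>sq: "\<sigma> * \<sigma> = 1" by (simp add: \<sigma>_def)

lemma \<tau>d: "(\<tau> has_real_derivative 1 / \<bar>bb y\<bar>) (at y)"
proof -
  have "(\<tau> has_real_derivative \<sigma> * (1 / bb y)) (at y)"
    unfolding \<tau>_def[abs_def] by (rule DERIV_cmult[OF Pd])
  moreover have "\<sigma> * (1 / bb y) = 1 / \<bar>bb y\<bar>"
    using \<sigma>_bb[of y] \<sigma>sq nz[of y] by (auto simp: field_simps \<sigma>_def split: if_splits)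
  ultimately show ?thesis by simp
qed

lemma \<tau>_strict: "a < b \<Longrightarrow> \<tau> a < \<tau> b"
  by (rule DERIV_pos_imp_increasing) (use \<tau>d nz in \<open>auto intro!: exI\<close>)

lemma P_inj: "P a = P b \<Longrightarrow> a = b"
  using \<tau>_strict[of a b] \<tau>_strict[of b a] by (auto simp: \<tau>_def) (metis linorder_neqE_linordered_idom)

lemma P_period: "P (y + 2 * pi) = P y + T"
proof -
  have "P (y + 2 * pi) - P y = P (0 + 2 * pi) - P 0"
    by (rule period_shift[OF Pd]) (simp add: bb_periodic)
  then show ?thesis by (simp add: T_def P0)
qed

lemma T_sigma: "\<sigma> * T = \<tau> (2 * pi) - \<tau> 0"
  by (simp add: \<tau>_def T_def P0)

lemma T_abs: "\<bar>T\<bar> = \<tau> (2 * pi) - \<tau> 0"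
proof -
  have "\<tau> (2 * pi) - \<tau> 0 > 0" using \<tau>_strict[of 0 "2 * pi"] by simp
  then show ?thesis using T_sigma by (auto simp: \<sigma>_def split: if_splits)
qed

lemma T_nz: "T \<noteq> 0"
  using T_abs \<tau>_strict[of 0 "2 * pi"] by auto

lemma P_period_nat: "P (y + 2 * pi * real n) = P y + real n * T"
proof (induction n)
  case (Suc n)
  have "P (y + 2 * pi * real (Suc n)) = P ((y + 2 * pi * real n) + 2 * pi)" by (simp add: algebra_simps)
  also have "\<dots> = P (y + 2 * pi * real n) + T" by (rule P_period)
  also have "\<dots> = P y + real n * T + T" using Suc.IH by simp
  finally show ?case by (simp add: algebra_simps)
qed simp

lemma P_surj: "\<exists>y. P y = z"
proof -
  obtain n :: nat where n: "\<bar>z\<bar> / \<bar>T\<bar> \<le> real n" using real_arch_simple by blast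
  have nT: "\<bar>z\<bar> \<le> real n * \<bar>T\<bar>" using n T_nz by (simp add: divide_le_eq)
  have p1: "P (2 * pi * real n) = real n * T" using P_period_nat[of 0 n] P0 by simp
  have p2: "P (- (2 * pi * real n)) = - (real n * T)"
    using P_period_nat[of "- (2 * pi * real n)" n] P0 by simp
  have c: "continuous_on S P" for S
    using Pd by (auto intro!: continuous_at_imp_continuous_on DERIV_isCont)
  have le: "- (2 * pi * real n) \<le> 2 * pi * real n" by simp
  show ?thesis
  proof (cases "T > 0")
    case True
    then have "P (- (2 * pi * real n)) \<le> z" "z \<le> P (2 * pi * real n)" using nT p1 p2 by (auto simp: abs_le_iff)
    then show ?thesis using IVT'[OF _ _ le c] by blast
  next
    case False
    then have "P (2 * pi * real n) \<le> z" "z \<le> P (- (2 * pi * real n))" using nT p1 p2 T_nz by (auto simp: abs_le_iff)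
    then show ?thesis using IVT2'[OF _ _ le c] by blast
  qed
qed

definition Q where "Q = inv P"

lemma PQ: "P (Q z) = z"
  unfolding Q_def by (metis P_surj f_inv_into_f rangeI)

lemma QP: "Q (P y) = y"
  unfolding Q_def by (meson P_inj injI inv_f_f)

lemma Q_isCont: "isCont Q z"
proof -
  have "isCont Q (P (Q z))"
    by (rule isCont_inverse_function[where d=1]) (auto simp: QP intro: DERIV_isCont[OF Pd])
  then show ?thesis by (simp add: PQ)
qed

lemma Qd: "(Q has_real_derivative bb (Q z)) (at z)"
proof -
  have "(Q has_real_derivative inverse (1 / bb (Q z))) (at z)"
    by (rule DERIV_inverse_function[where f=P and g=Q and x=z and D="1 / bb (Q z)" and a="z - 1" and b="z + 1"])
       (auto simp: PQ Pd Q_isCont nz)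
  then show ?thesis by simp
qed

lemma Q0: "Q 0 = 0" using QP[of 0] P0 by simp

lemma Q_period: "Q (z + T) = Q z + 2 * pi"
  using QP[of "Q z + 2 * pi"] P_period[of "Q z"] PQ[of z] by simp

end

context nzsetup
begin

definition \<psi> where "\<psi> s t = Q (P (2 * pi * s) - t)"

lemma \<psi>0: "\<psi> s 0 = 2 * pi * s" by (simp add: \<psi>_def QP)

lemma \<psi>d: "(\<psi> s has_real_derivative - bb (\<psi> s t)) (at t)"
proof -
  have "((\<lambda>t. P (2 * pi * s) - t) has_real_derivative -1) (at t)" by (auto intro!: derivative_eq_intros)
  from DERIV_chain'[OF this Qd] show ?thesis by (simp add: \<psi>_def[abs_def])
qed

lemma \<psi>_cont: "continuous_on S (\<psi> s)"
  using \<psi>d by (auto intro!: continuous_at_imp_continuous_on DERIV_isCont)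

lemma circ_d: "((\<lambda>t. cis (\<psi> s t)) has_vector_derivative hamvf H t (cis (\<psi> s t))) (at t)"
proof -
  have "((\<lambda>t. cis (\<psi> s t)) has_derivative (\<lambda>h. ((- bb (\<psi> s t)) * h) *\<^sub>R (\<i> * cis (\<psi> s t)))) (at t)"
    using has_derivative_cis[OF \<psi>d[unfolded has_field_derivative_def]] by simp
  moreover have "(\<lambda>h. ((- bb (\<psi> s t)) * h) *\<^sub>R (\<i> * cis (\<psi> s t))) = (\<lambda>h. h *\<^sub>R hamvf H t (cis (\<psi> s t)))"
    by (auto simp: hamvf_circle scaleR_conv_of_real algebra_simps)
  ultimately show ?thesis by (simp add: has_vector_derivative_def)
qed

lemma flow_circle: "flow H t (cis (2 * pi * s)) = cis (\<psi> s t)"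
  using flow_eq[OF circ_d, of t] by (simp add: \<psi>0)

lemma lift_eq: "boundary_lift H s = \<psi> s 1 / (2 * pi)"
  unfolding boundary_lift_def
proof (rule the_equality)
  show "\<exists>\<theta>. continuous_on {0..1} \<theta> \<and> \<theta> 0 = s \<and> (\<forall>t\<in>{0..1}. flow H t (cis (2 * pi * s)) = cis (2 * pi * \<theta> t))
      \<and> \<psi> s 1 / (2 * pi) = \<theta> 1"
    by (intro exI[of _ "\<lambda>t. \<psi> s t / (2 * pi)"] conjI)
       (auto simp: \<psi>0 flow_circle intro!: continuous_intros \<psi>_cont)
next
  fix y assume "\<exists>\<theta>. continuous_on {0..1} \<theta> \<and> \<theta> 0 = s \<and> (\<forall>t\<in>{0..1}. flow H t (cis (2 * pi * s)) = cis (2 * pi * \<theta> t))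
      \<and> y = \<theta> 1"
  then obtain \<theta> where c: "continuous_on {0..1} \<theta>" and t0: "\<theta> 0 = s"
    and fl: "\<forall>t\<in>{0..1}. flow H t (cis (2 * pi * s)) = cis (2 * pi * \<theta> t)" and y: "y = \<theta> 1" by blast
  have "(\<lambda>t. 2 * pi * \<theta> t) 1 - (\<lambda>t. 2 * pi * \<theta> t) 0 = \<psi> s 1 - \<psi> s 0"
  proof (rule lift_unique)
    show "continuous_on {0..1} (\<lambda>t. 2 * pi * \<theta> t)" by (intro continuous_intros c)
    show "continuous_on {0..1} (\<psi> s)" by (rule \<psi>_cont)
    fix t :: real assume "t \<in> {0..1}"
    then show "cis (2 * pi * \<theta> t) = cis (\<psi> s t)" using fl flow_circle by metis
  qed
  then show "y = \<psi> s 1 / (2 * pi)" using t0 y by (simp add: \<psi>0 field_simps)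
qed

lemma iter: "(boundary_lift H ^^ k) 0 = Q (- real k) / (2 * pi)"
proof (induction k)
  case 0 then show ?case by (simp add: Q0)
next
  case (Suc k)
  have "(boundary_lift H ^^ Suc k) 0 = boundary_lift H (Q (- real k) / (2 * pi))" using Suc by simp
  also have "\<dots> = Q (P (Q (- real k)) - 1) / (2 * pi)" by (simp add: lift_eq \<psi>_def)
  also have "P (Q (- real k)) - 1 = - real (Suc k)" by (simp add: PQ)
  finally show ?case by simp
qed

definition g where "g z = Q z - 2 * pi * z / T"

lemma g_period: "g (z + T) = g z"
  using T_nz by (simp add: g_def Q_period field_simps)

lemma g_period_nat: "g (z + real n * T) = g z"
proof (induction n)
  case (Suc n)
  have "g (z + real (Suc n) * T) = g ((z + real n * T) + T)" by (simp add: algebra_simps)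
  also have "\<dots> = g z" using g_period Suc by simp
  finally show ?case .
qed simp

lemma g_bounded: "\<exists>C. \<forall>z. \<bar>g z\<bar> \<le> C"
proof -
  define I where "I = {min 0 T .. max 0 T}"
  have cg: "continuous_on I g" unfolding g_def[abs_def]
    by (intro continuous_intros) (use T_nz in \<open>auto intro: continuous_at_imp_continuous_on Q_isCont\<close>)
  obtain C where C: "\<forall>v \<in> g ` I. norm v \<le> C"
    using compact_imp_bounded[OF compact_continuous_image[OF cg compact_Icc[of "min 0 T" "max 0 T", folded I_def]]]
    unfolding bounded_iff by blast
  show ?thesis
  proof (intro exI[of _ C] allI)
    fix z
    define k where "k = \<lfloor>z / T\<rfloor>"
    define f where "f = z / T - of_int k"
    have f: "0 \<le> f" "f < 1" unfolding f_def k_def by linarith+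
    define z0 where "z0 = T * f"
    have "z0 + of_int k * T = T * (z / T)" by (simp add: z0_def f_def algebra_simps)
    then have zz: "z = z0 + of_int k * T" using T_nz by simp
    have z0I: "z0 \<in> I"
    proof (cases "T > 0")
      case True
      then have "0 \<le> T * f" "T * f \<le> T" using f by (auto simp: mult_le_cancel_left1 less_imp_le)
      then show ?thesis using True by (simp add: I_def z0_def)
    next
      case False
      then have "T * f \<le> 0" "T \<le> T * f" using f T_nz
        by (auto simp: mult_nonpos_nonneg mult_le_cancel_left2 less_imp_le)
      then show ?thesis using False by (simp add: I_def z0_def)
    qed
    have "g z = g z0"
    proof (cases "k \<ge> 0")
      case True
      then have e: "real (nat k) = of_int k" by simp
      show ?thesis using zz g_period_nat[of z0 "nat k"] e by simp
    next
      case False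
      then have e: "real (nat (- k)) = - of_int k" by simp
      have "z0 = z + real (nat (- k)) * T" using zz by (simp add: e)
      then show ?thesis using g_period_nat[of z "nat (- k)"] by simp
    qed
    then show "\<bar>g z\<bar> \<le> C" using C z0I by auto
  qed
qed

lemma rot_eq: "rotation_number H = - 1 / T"
proof -
  obtain C where C: "\<And>z. \<bar>g z\<bar> \<le> C" using g_bounded by blast
  have lim0: "(\<lambda>k. g (- real k) / (2 * pi * real k)) \<longlonglongrightarrow> 0"
  proof (rule Lim_null_comparison)
    show "\<forall>\<^sub>F k in sequentially. norm (g (- real k) / (2 * pi * real k)) \<le> C / (2 * pi) / real k"
    proof (rule always_eventually, rule allI)
      fix k :: nat
      show "norm (g (- real k) / (2 * pi * real k)) \<le> C / (2 * pi) / real k"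
      proof (cases "k = 0")
        case False
        then have "real k > 0" by simp
        then show ?thesis using C[of "- real k"] by (simp add: abs_divide divide_right_mono field_simps)
      qed simp
    qed
    show "(\<lambda>k. C / (2 * pi) / real k) \<longlonglongrightarrow> 0" by (rule lim_const_over_n)
  qed
  have "(\<lambda>k. - 1 / T + g (- real k) / (2 * pi * real k)) \<longlonglongrightarrow> - 1 / T + 0"
    by (intro tendsto_intros lim0)
  moreover have "\<forall>\<^sub>F k in sequentially. - 1 / T + g (- real k) / (2 * pi * real k)
      = ((boundary_lift H ^^ k) 0 - 0) / real k"
  proof (rule eventually_sequentiallyI[of 1])
    fix k :: nat assume "1 \<le> k"
    then have k: "real k > 0" by simp
    show "- 1 / T + g (- real k) / (2 * pi * real k) = ((boundary_lift H ^^ k) 0 - 0) / real k"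
      unfolding iter g_def using k T_nz by (simp add: field_simps)
  qed
  ultimately have "(\<lambda>k. ((boundary_lift H ^^ k) 0 - 0) / real k) \<longlonglongrightarrow> - 1 / T"
    using tendsto_cong by force
  then show ?thesis unfolding rotation_number_def by (rule limI)
qed

end

lemma ratio_ineq:
  fixes m b \<delta> :: real
  assumes m: "0 < m" and mb: "m \<le> b" and d: "0 < \<delta>"
  shows "(1 - \<delta> / m) * (1 / b) \<le> 1 / (b + \<delta>)"
proof -
  have b: "0 < b" using m mb by simp
  have "0 \<le> \<delta> * (b + \<delta> - m)" using d mb by (intro mult_nonneg_nonneg) auto
  then have le: "(m - \<delta>) * (b + \<delta>) \<le> m * b" by (simp add: algebra_simps)
  have e: "(1 - \<delta> / m) * (1 / b) = (m - \<delta>) / (m * b)" using m b by (simp add: field_simps)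
  have "(m - \<delta>) / (m * b) \<le> 1 / (b + \<delta>)"
    using le m b d by (simp add: divide_le_eq le_divide_eq mult.commute)
  then show ?thesis using e by simp
qed

context nzsetup
begin

lemma theta_nz:
  assumes rot: "\<bar>rotation_number H\<bar> < 1"
  shows "\<exists>\<delta>>0. \<exists>\<Theta>. (\<forall>y. (\<Theta> has_real_derivative 1 / (\<bar>bb y\<bar> + \<delta>)) (at y)) \<and> \<Theta> (0 + 2 * pi) - \<Theta> 0 > 1"
proof -
  have "\<bar>- 1 / T\<bar> < 1" using rot rot_eq by simp
  then have T1: "\<bar>T\<bar> > 1" using T_nz by (simp add: abs_divide divide_less_eq)
  have c: "continuous_on {0..2*pi} (\<lambda>y. \<bar>bb y\<bar>)"
    by (intro continuous_intros continuous_at_imp_continuous_on ballI bb_isCont)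
  obtain x0 where x0: "x0 \<in> {0..2*pi}" and mn: "\<And>y. y \<in> {0..2*pi} \<Longrightarrow> \<bar>bb x0\<bar> \<le> \<bar>bb y\<bar>"
    using continuous_attains_inf[OF compact_Icc _ c] by auto
  define m where "m = \<bar>bb x0\<bar>"
  have m: "m > 0" using nz[of x0] by (simp add: m_def)
  define \<delta> where "\<delta> = m * (\<bar>T\<bar> - 1) / (2 * \<bar>T\<bar>)"
  have \<delta>: "\<delta> > 0" using m T1 by (simp add: \<delta>_def)
  obtain \<Theta> where \<Theta>d: "\<And>y. (\<Theta> has_real_derivative 1 / (\<bar>bb y\<bar> + \<delta>)) (at y)"
    using theta_antideriv[OF \<delta>] by blast
  define c where "c = 1 - \<delta> / m"
  have "(\<lambda>y. \<Theta> y - c * \<tau> y) 0 \<le> (\<lambda>y. \<Theta> y - c * \<tau> y) (2 * pi)"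
  proof (rule DERIV_nonneg_imp_nondecreasing[where f="\<lambda>y. \<Theta> y - c * \<tau> y"])
    show "0 \<le> 2 * pi" by simp
    fix y assume y: "0 \<le> y" "y \<le> 2 * pi"
    have d: "((\<lambda>y. \<Theta> y - c * \<tau> y) has_real_derivative 1 / (\<bar>bb y\<bar> + \<delta>) - c * (1 / \<bar>bb y\<bar>)) (at y)"
      by (intro DERIV_diff \<Theta>d DERIV_cmult \<tau>d)
    have "c * (1 / \<bar>bb y\<bar>) \<le> 1 / (\<bar>bb y\<bar> + \<delta>)"
      unfolding c_def by (rule ratio_ineq[OF m _ \<delta>]) (use mn y in \<open>auto simp: m_def\<close>)
    then show "\<exists>d. ((\<lambda>y. \<Theta> y - c * \<tau> y) has_real_derivative d) (at y) \<and> 0 \<le> d"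
      using d by (intro exI[of _ "1 / (\<bar>bb y\<bar> + \<delta>) - c * (1 / \<bar>bb y\<bar>)"]) simp
  qed
  then have "\<Theta> (2 * pi) - \<Theta> 0 \<ge> c * (\<tau> (2 * pi) - \<tau> 0)" by (simp add: algebra_simps)
  also have "c * (\<tau> (2 * pi) - \<tau> 0) = c * \<bar>T\<bar>" by (simp add: T_abs)
  also have "c * \<bar>T\<bar> = (\<bar>T\<bar> + 1) / 2" using m T1 by (simp add: c_def \<delta>_def field_simps)
  finally have "\<Theta> (2 * pi) - \<Theta> 0 > 1" using T1 by simp
  then show ?thesis using \<delta> \<Theta>d by (intro exI[of _ \<delta>] conjI exI[of _ \<Theta>]) auto
qed

end

context hsetup
begin

lemma theta_exists:
  assumes rot: "\<bar>rotation_number H\<bar> < 1"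
  shows "\<exists>\<delta>>0. \<exists>\<Theta>. (\<forall>y. (\<Theta> has_real_derivative 1 / (\<bar>bb y\<bar> + \<delta>)) (at y)) \<and> (\<forall>y. \<Theta> (y + 2 * pi) - \<Theta> y > 1)"
proof -
  have "\<exists>y0 \<delta>. \<delta> > 0 \<and> (\<exists>\<Theta>. (\<forall>y. (\<Theta> has_real_derivative 1 / (\<bar>bb y\<bar> + \<delta>)) (at y)) \<and> \<Theta> (y0 + 2 * pi) - \<Theta> y0 > 1)"
  proof (cases "\<exists>y0. bb y0 = 0")
    case True
    then obtain y0 where "bb y0 = 0" by blast
    then show ?thesis using zero_case by blast
  next
    case False
    then have nz: "\<And>y. bb y \<noteq> 0" by blast
    have "isCont (\<lambda>y. 1 / bb y) y" for y using bb_isCont[of y] nz[of y] by (intro continuous_intros) auto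
    then obtain P where Pd: "\<And>y. (P has_real_derivative 1 / bb y) (at y)" using antideriv_exists by blast
    interpret nz: nzsetup H F' "\<lambda>y. P y - P 0"
    proof unfold_locales
      show "bb y \<noteq> 0" for y by (rule nz)
      show "((\<lambda>y. P y - P 0) has_real_derivative 1 / bb y) (at y)" for y
        using DERIV_diff[OF Pd DERIV_const[of "P 0"]] by simp
    qed simp
    show ?thesis using nz.theta_nz[OF rot] by blast
  qed
  then obtain y0 \<delta> \<Theta> where \<delta>: "\<delta> > 0" and \<Theta>d: "\<And>y. (\<Theta> has_real_derivative 1 / (\<bar>bb y\<bar> + \<delta>)) (at y)"
    and p: "\<Theta> (y0 + 2 * pi) - \<Theta> y0 > 1" by blast
  have "\<Theta> (y + 2 * pi) - \<Theta> y > 1" for y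
    using period_shift[OF \<Theta>d, of "2 * pi" y y0] p by (simp add: bb_periodic)
  then show ?thesis using \<delta> \<Theta>d by blast
qed

end

theorem lemma4p2:
  fixes H :: "real \<Rightarrow> complex \<Rightarrow> real" and \<rho> :: "nat \<Rightarrow> real \<Rightarrow> real"
  assumes H_smooth: "smooth (\<lambda>p::real \<times> complex. H (fst p) (snd p))"
    and H_periodic: "\<And>t z. H (t + 1) z = H t z"
    and H_boundary: "\<And>t z. norm z = 1 \<Longrightarrow> H t z = 0"
    and X_autonomous: "\<And>t s z. norm z = 1 \<Longrightarrow> hamvf H t z = hamvf H s z"
    and rot: "\<bar>rotation_number H\<bar> < 1"
    and rho_smooth: "\<And>n. n \<ge> 1 \<Longrightarrow> smooth (\<rho> n)"
    and rho_neg: "\<And>n r. n \<ge> 1 \<Longrightarrow> r \<le> 0 \<Longrightarrow> \<rho> n r = r"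
    and rho_far: "\<And>n r. n \<ge> 1 \<Longrightarrow> r \<ge> 1 / real n \<Longrightarrow> \<rho> n r = 0"
    and rho_nonneg: "\<And>n r. n \<ge> 1 \<Longrightarrow> r \<ge> 0 \<Longrightarrow> \<rho> n r \<ge> 0"
    and rho_deriv_bound: "\<And>n r. n \<ge> 1 \<Longrightarrow> r \<ge> 0 \<Longrightarrow> \<bar>deriv (\<rho> n) r\<bar> \<le> 1"
    and rho_bound: "\<And>n r. n \<ge> 1 \<Longrightarrow> r \<ge> 0 \<Longrightarrow> \<bar>\<rho> n r\<bar> \<le> 1 / real n"
    and rho_deriv_lower: "\<And>n r. n \<ge> 1 \<Longrightarrow> deriv (\<rho> n) r \<ge> - (1 / real n)"
  shows "\<exists>N. \<forall>n\<ge>N. \<forall>x :: real \<Rightarrow> complex.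
           (\<forall>t\<in>{0..1}. (x has_vector_derivative hamvf (cutoff_ham H (\<rho> n)) t (x t)) (at t within {0..1}))
           \<and> (\<forall>t\<in>{0..1}. norm (x t) \<ge> 1)
           \<longrightarrow> \<bar>wind x\<bar> < 1"
proof -
  obtain F' where Fd: "\<And>p. ((\<lambda>p. H (fst p) (snd p)) has_derivative F' p) (at p)"
    and Fs: "\<And>v. smooth (\<lambda>p. F' p v)"
    using smooth_E[OF H_smooth] by blast
  interpret hs: hsetup H F'
    by unfold_locales (use Fd Fs H_boundary X_autonomous in auto)
  obtain \<delta> \<Theta> where \<delta>: "\<delta> > 0" and \<Theta>d: "\<And>y. (\<Theta> has_real_derivative 1 / (\<bar>hs.bb y\<bar> + \<delta>)) (at y)"
    and \<Theta>p: "\<And>y. \<Theta> (y + 2 * pi) - \<Theta> y > 1"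
    using hs.theta_exists[OF rot] by blast
  obtain \<eta> where \<eta>: "\<eta> > 0" and est: "\<forall>t u g R. t \<in> {0..1} \<longrightarrow> norm u = 1 \<longrightarrow> 1 \<le> g \<longrightarrow> g \<le> 1 + \<eta>
      \<longrightarrow> 1 \<le> R \<longrightarrow> R \<le> 1 + \<eta> \<longrightarrow> \<bar>hs.dH t (of_real g * u) u / R - hs.dH 0 u u\<bar> \<le> \<delta>"
    using hs.est[OF \<delta>] by blast
  obtain N :: nat where N: "1 / \<eta> < real N" using reals_Archimedean2 by blast
  have N1: "N \<ge> 1" using N \<eta> by (cases N) (auto simp: divide_less_0_iff)
  show ?thesis
  proof (intro exI[of _ N] allI impI)
    fix n :: nat and x :: "real \<Rightarrow> complex"
    assume n: "N \<le> n"
      and xa: "(\<forall>t\<in>{0..1}. (x has_vector_derivative hamvf (cutoff_ham H (\<rho> n)) t (x t)) (at t within {0..1}))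
           \<and> (\<forall>t\<in>{0..1}. norm (x t) \<ge> 1)"
    have n1: "n \<ge> 1" using n N1 by simp
    have e\<eta>: "1 / real n \<le> \<eta>"
    proof -
      have "1 / \<eta> < real n" using N n by linarith
      then show ?thesis using \<eta> n1 by (simp add: divide_less_eq field_simps)
    qed
    have \<rho>d: "(\<rho> n has_real_derivative deriv (\<rho> n) r) (at r)" for r
    proof -
      obtain f' where "\<And>x. (\<rho> n has_derivative f' x) (at x)" using smooth_E[OF rho_smooth[OF n1]] by blast
      then have "\<rho> n differentiable (at r)" by (rule differentiableI)
      then show ?thesis using DERIV_deriv_iff_real_differentiable by blast
    qed
    show "\<bar>wind x\<bar> < 1"
    proof (rule hs.traj_bound[where \<rho>="\<rho> n" and \<rho>'="deriv (\<rho> n)" and e="1 / real n" and \<eta>=\<eta>, OF \<delta> _ \<Theta>d \<Theta>p \<rho>d])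
      show "\<And>t u g R. t \<in> {0..1} \<Longrightarrow> norm u = 1 \<Longrightarrow> 1 \<le> g \<Longrightarrow> g \<le> 1 + \<eta> \<Longrightarrow> 1 \<le> R \<Longrightarrow> R \<le> 1 + \<eta>
          \<Longrightarrow> \<bar>hs.dH t (of_real g * u) u / R - hs.dH 0 u u\<bar> \<le> \<delta>" using est by blast
      show "\<And>r. r \<le> 0 \<Longrightarrow> \<rho> n r = r" using rho_neg[OF n1] .
      show "\<And>r. r \<ge> 1 / real n \<Longrightarrow> \<rho> n r = 0" using rho_far[OF n1] .
      show "\<And>r. r \<ge> 0 \<Longrightarrow> \<rho> n r \<ge> 0" using rho_nonneg[OF n1] .
      show "\<And>r. r \<ge> 0 \<Longrightarrow> \<rho> n r \<le> 1 / real n" using rho_bound[OF n1] by (meson abs_le_D1)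
      show "\<And>r. r \<ge> 0 \<Longrightarrow> \<bar>deriv (\<rho> n) r\<bar> \<le> 1" using rho_deriv_bound[OF n1] .
      show "1 / real n \<le> \<eta>" by (rule e\<eta>)
      show "\<forall>t\<in>{0..1}. (x has_vector_derivative hamvf (cutoff_ham H (\<rho> n)) t (x t)) (at t within {0..1})"
        using xa by blast
      show "\<forall>t\<in>{0..1}. norm (x t) \<ge> 1" using xa by blast
    qed
  qed
qed


end
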